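(* Let $\Phi$ be a Young function with $\Phi,\widetilde\Phi\in\Delta_2$, $\Phi(t)=\int_0^t\phi$, $Q\subset\mathbb{R}^N$ bounded open, $\{T(x)\}$ an $N$-dimensional dynamical system on $(\Omega,\mathscr{M},\mu)$, and $f$ satisfying (H$_1$)–(H$_3$). Then for every $\mathbf v\in[\mathcal{C}^\infty(\Omega)\otimes\mathcal{C}(\overline Q;\mathbb{R})]^N$, $$\lim_{\epsilon\to0}\iint_{Q\times\Omega}f(T(\epsilon^{-1}x)\omega,\mathbf v(x,T(\epsilon^{-1}x)\omega))\,dx\,d\mu=\iint_{Q\times\Omega}f(\omega,\mathbf v(x,\omega))\,dx\,d\mu.$$ Furthermore the map $\mathbf v\mapsto f(\cdot,\mathbf v)$, $f(\cdot,\mathbf v)(x,\omega)=f(\omega,\mathbf v(x,\omega))$, from $[\mathcal{C}^\infty(\Omega)\otimes\mathcal{C}(\overline Q;\mathbb{R})]^N$ into $L^1(Q\times\Omega)$ extends by continuity to a map $[L^\Phi(Q\times\Omega)]^N\to L^1(Q\times\Omega)$, and there is $c>0$ such that for all $\mathbf v,\mathbf w\in[L^\Phi(Q\times\Omega)]^N$, $$\|f(\cdot,\mathbf v)-f(\cdot,\mathbf w)\|_{L^1(Q\times\Omega)}\le c\big(\|1\|_{L^{\widetilde\Phi}(Q\times\Omega)}+\|\phi(1+|\mathbf v|+|\mathbf w|)\|_{L^{\widetilde\Phi}(Q\times\Omega)}\big)\|\mathbf v-\mathbf w\|_{L^\Phi(Q\times\Omega)^N}.$$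
   Context: Young function $\Phi=\int_0^t\phi$ ($\phi$ nondecreasing, right continuous, $\phi(0)=0$), conjugate $\widetilde\Phi(t)=\sup_{s\ge0}(st-\Phi(s))$, $\Delta_2$: $\Phi(2t)\le k\Phi(t)$ for $t\ge t_0$; standing assumption $\Phi,\widetilde\Phi\in\Delta'$. Luxemburg norms, $L^\Phi(Q\times\Omega)^N$ normed by sum of component norms. $N$-dimensional dynamical system: invertible bimeasurable maps $T(x)$ of the probability space $(\Omega,\mathscr{M},\mu)$, $T(0)=\mathrm{id}$, group property, $\mu$-preserving, jointly measurable. (H$_1$) $f(\cdot,\lambda)$ measurable for all $\lambda$; (H$_2$) $f(\omega,\cdot)$ strictly convex for a.e. $\omega$; (H$_3$) $c_1\Phi(|\lambda|)\le f(\omega,\lambda)\le c_2(1+\Phi(|\lambda|))$ for all $\lambda$, a.e. $\omega$. $\mathcal{C}^\infty(\Omega)$: elements of $L^\infty(\Omega)$ all of whose iterated stochastic derivatives (strong $L^\infty$-limits of $(f\circ T(te_i)-f)/t$) exist in $L^\infty(\Omega)$; $\mathcal{C}^\infty(\Omega)\otimes\mathcal{C}(\overline Q;\mathbb{R})$: finite sums of products $\psi(\omega)\varphi(x)$. *)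

theory Defs
  imports "HOL-Analysis.Analysis" "HOL-Probability.Probability"
begin

definition young_function :: "(real \<Rightarrow> real) \<Rightarrow> (real \<Rightarrow> real) \<Rightarrow> bool" where
  "young_function \<phi> \<Phi> \<longleftrightarrow>
     mono_on {0..} \<phi> \<and>
     (\<forall>t\<ge>0. continuous (at_right t) \<phi>) \<and>
     \<phi> 0 = 0 \<and>
     (\<forall>t>0. \<phi> t > 0) \<and>
     filterlim \<phi> at_top at_top \<and>
     (\<forall>t\<ge>0. \<Phi> t = integral {0..t} \<phi>)"

definition young_conj :: "(real \<Rightarrow> real) \<Rightarrow> real \<Rightarrow> real" where
  "young_conj \<Phi> t = (SUP s\<in>{0..}. s * t - \<Phi> s)"

definition Delta2 :: "(real \<Rightarrow> real) \<Rightarrow> bool" where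
  "Delta2 \<Phi> \<longleftrightarrow> (\<exists>k>0. \<exists>t0\<ge>0. \<forall>t\<ge>t0. \<Phi> (2 * t) \<le> k * \<Phi> t)"

definition Delta' :: "(real \<Rightarrow> real) \<Rightarrow> bool" where
  "Delta' \<Phi> \<longleftrightarrow> (\<exists>k>0. \<exists>t0\<ge>0. \<forall>t\<ge>t0. \<forall>s\<ge>t0. \<Phi> (t * s) \<le> k * \<Phi> t * \<Phi> s)"

definition orlicz :: "'a measure \<Rightarrow> (real \<Rightarrow> real) \<Rightarrow> ('a \<Rightarrow> real) set" where
  "orlicz X \<Phi> = {u \<in> borel_measurable X.
      \<exists>k>0. (\<integral>\<^sup>+ z. ennreal (\<Phi> (\<bar>u z\<bar> / k)) \<partial>X) < \<infinity>}"

definition lux_norm :: "'a measure \<Rightarrow> (real \<Rightarrow> real) \<Rightarrow> ('a \<Rightarrow> real) \<Rightarrow> real" where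
  "lux_norm X \<Phi> u = Inf {k. k > 0 \<and> (\<integral>\<^sup>+ z. ennreal (\<Phi> (\<bar>u z\<bar> / k)) \<partial>X) \<le> 1}"

definition lux_normN :: "'a measure \<Rightarrow> (real \<Rightarrow> real) \<Rightarrow> ('a \<Rightarrow> real ^ 'n) \<Rightarrow> real" where
  "lux_normN X \<Phi> v = (\<Sum>i\<in>UNIV. lux_norm X \<Phi> (\<lambda>z. v z $ i))"

definition orliczN :: "'a measure \<Rightarrow> (real \<Rightarrow> real) \<Rightarrow> ('a \<Rightarrow> real ^ 'n::finite) set" where
  "orliczN X \<Phi> = {v. \<forall>i. (\<lambda>z. v z $ i) \<in> orlicz X \<Phi>}"

definition dynamical_system :: "'w measure \<Rightarrow> (real ^ 'n \<Rightarrow> 'w \<Rightarrow> 'w) \<Rightarrow> bool" where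
  "dynamical_system M T \<longleftrightarrow>
     (\<forall>x. T x \<in> M \<rightarrow>\<^sub>M M) \<and>
     (\<forall>x. bij_betw (T x) (space M) (space M)) \<and>
     (\<forall>x. \<forall>A\<in>sets M. (\<lambda>\<omega>. T x \<omega>) ` A \<in> sets M) \<and>
     (\<forall>\<omega>\<in>space M. T 0 \<omega> = \<omega>) \<and>
     (\<forall>x y. \<forall>\<omega>\<in>space M. T (x + y) \<omega> = T x (T y \<omega>)) \<and>
     (\<forall>x. distr M M (T x) = M) \<and>
     (\<lambda>p. T (fst p) (snd p)) \<in> (lborel \<Otimes>\<^sub>M M) \<rightarrow>\<^sub>M M"

definition Linf :: "'w measure \<Rightarrow> ('w \<Rightarrow> real) set" where
  "Linf M = {u \<in> borel_measurable M. \<exists>C. AE \<omega> in M. \<bar>u \<omega>\<bar> \<le> C}"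

definition stoch_deriv ::
  "'w measure \<Rightarrow> (real ^ 'n \<Rightarrow> 'w \<Rightarrow> 'w) \<Rightarrow> 'n \<Rightarrow> ('w \<Rightarrow> real) \<Rightarrow> ('w \<Rightarrow> real) \<Rightarrow> bool" where
  "stoch_deriv M T i u g \<longleftrightarrow> u \<in> Linf M \<and> g \<in> Linf M \<and>
     ((\<lambda>t. esssup M (\<lambda>\<omega>. ereal \<bar>(u (T (t *\<^sub>R axis i 1) \<omega>) - u \<omega>) / t - g \<omega>\<bar>))
        \<longlongrightarrow> 0) (at 0)"

inductive iter_sderiv ::
  "'w measure \<Rightarrow> (real ^ 'n \<Rightarrow> 'w \<Rightarrow> 'w) \<Rightarrow> 'n list \<Rightarrow> ('w \<Rightarrow> real) \<Rightarrow> ('w \<Rightarrow> real) \<Rightarrow> bool"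
  for M T where
  Nil: "u \<in> Linf M \<Longrightarrow> iter_sderiv M T [] u u"
| Cons: "stoch_deriv M T i u g \<Longrightarrow> iter_sderiv M T is g h \<Longrightarrow> iter_sderiv M T (i # is) u h"

definition Cinf :: "'w measure \<Rightarrow> (real ^ 'n \<Rightarrow> 'w \<Rightarrow> 'w) \<Rightarrow> ('w \<Rightarrow> real) set" where
  "Cinf M T = {u \<in> Linf M. \<forall>is. \<exists>h. iter_sderiv M T is u h}"

definition tensor_space ::
  "'w measure \<Rightarrow> (real ^ 'n \<Rightarrow> 'w \<Rightarrow> 'w) \<Rightarrow> (real ^ 'n) set \<Rightarrow> ((real ^ 'n) \<times> 'w \<Rightarrow> real) set" where
  "tensor_space M T Q = {v. \<exists>(K::nat) \<psi> \<phi>.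
      (\<forall>k<K. \<psi> k \<in> Cinf M T \<and> continuous_on (closure Q) (\<phi> k)) \<and>
      (\<forall>x\<in>closure Q. \<forall>\<omega>\<in>space M. v (x, \<omega>) = (\<Sum>k<K. \<psi> k \<omega> * \<phi> k x))}"

definition tensor_spaceN ::
  "'w measure \<Rightarrow> (real ^ 'n \<Rightarrow> 'w \<Rightarrow> 'w) \<Rightarrow> (real ^ 'n) set \<Rightarrow> ((real ^ 'n) \<times> 'w \<Rightarrow> real ^ 'n) set" where
  "tensor_spaceN M T Q = {v. \<forall>i. (\<lambda>z. v z $ i) \<in> tensor_space M T Q}"

definition strictly_convex :: "('a::real_vector \<Rightarrow> real) \<Rightarrow> bool" where
  "strictly_convex g \<longleftrightarrow> (\<forall>x y t. x \<noteq> y \<and> 0 < t \<and> t < 1 \<longrightarrow>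
      g ((1 - t) *\<^sub>R x + t *\<^sub>R y) < (1 - t) * g x + t * g y)"

end

theory Submission
  imports Defs
begin


lemma yf_basic:
  assumes "young_function \<phi> \<Phi>"
  shows "mono_on {0..} \<phi>" "\<phi> 0 = 0" "\<And>t. t \<ge> 0 \<Longrightarrow> \<phi> t \<ge> 0"
    "\<And>t. t > 0 \<Longrightarrow> \<phi> t > 0" "filterlim \<phi> at_top at_top"
    "\<And>t. t \<ge> 0 \<Longrightarrow> \<Phi> t = integral {0..t} \<phi>"
  using assms unfolding young_function_def apply auto
  by (metis atLeast_iff mono_onD order_refl)

lemma yf_int:
  assumes "young_function \<phi> \<Phi>" "0 \<le> a"
  shows "\<phi> integrable_on {a..b}"
  apply (rule integrable_on_mono_on)
  using yf_basic(1)[OF assms(1)] assms(2) by (auto intro: mono_on_subset)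

lemma yf_diff:
  assumes "young_function \<phi> \<Phi>" "0 \<le> x" "x \<le> y"
  shows "\<Phi> y - \<Phi> x = integral {x..y} \<phi>"
proof -
  have "integral {0..x} \<phi> + integral {x..y} \<phi> = integral {0..y} \<phi>"
    using Henstock_Kurzweil_Integration.integral_combine[OF assms(2,3) yf_int[OF assms(1), of 0 y]] by simp
  thus ?thesis using yf_basic(6)[OF assms(1)] assms by auto
qed

lemma yf_diff_bounds:
  assumes "young_function \<phi> \<Phi>" "0 \<le> x" "x \<le> y"
  shows "(y - x) * \<phi> x \<le> \<Phi> y - \<Phi> x" "\<Phi> y - \<Phi> x \<le> (y - x) * \<phi> y"
proof -
  have m: "\<And>t. t \<in> {x..y} \<Longrightarrow> \<phi> x \<le> \<phi> t \<and> \<phi> t \<le> \<phi> y"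
    using yf_basic(1)[OF assms(1)] assms by (auto intro: mono_onD)
  have i: "\<phi> integrable_on {x..y}" using yf_int assms by auto
  have "integral {x..y} (\<lambda>_. \<phi> x) \<le> integral {x..y} \<phi>"
    by (rule integral_le) (use i m in auto)
  thus "(y - x) * \<phi> x \<le> \<Phi> y - \<Phi> x" using yf_diff[OF assms] assms by simp
  have "integral {x..y} \<phi> \<le> integral {x..y} (\<lambda>_. \<phi> y)"
    by (rule integral_le) (use i m in auto)
  thus "\<Phi> y - \<Phi> x \<le> (y - x) * \<phi> y" using yf_diff[OF assms] assms by simp
qed

lemma yf_Phi0: assumes "young_function \<phi> \<Phi>" shows "\<Phi> 0 = 0"
  using yf_basic(6)[OF assms, of 0] by simp

lemma yf_Phi_nonneg: assumes "young_function \<phi> \<Phi>" "0 \<le> t" shows "0 \<le> \<Phi> t"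
  using yf_diff_bounds(1)[OF assms(1) order_refl assms(2)] yf_Phi0[OF assms(1)]
    yf_basic(3)[OF assms(1), of 0] assms(2) by (smt (verit) mult_nonneg_nonneg)

lemma yf_Phi_mono: assumes "young_function \<phi> \<Phi>" "0 \<le> x" "x \<le> y" shows "\<Phi> x \<le> \<Phi> y"
  using yf_diff_bounds(1)[OF assms] yf_basic(3)[OF assms(1) assms(2)] assms
  by (smt (verit) mult_nonneg_nonneg)

lemma yf_Phi_le: assumes "young_function \<phi> \<Phi>" "0 \<le> x" shows "\<Phi> x \<le> x * \<phi> x"
  using yf_diff_bounds(2)[OF assms(1) order_refl assms(2)] yf_Phi0[OF assms(1)] by simp

lemma yf_phi_le: assumes "young_function \<phi> \<Phi>" "0 \<le> x" shows "x * \<phi> x \<le> \<Phi> (2*x)"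
  using yf_diff_bounds(1)[OF assms(1) assms(2), of "2*x"] yf_Phi_nonneg[OF assms] assms by simp

lemma yf_Phi_scale:
  assumes "young_function \<phi> \<Phi>" "0 \<le> x" "0 \<le> s" "s \<le> 1"
  shows "\<Phi> (s * x) \<le> s * \<Phi> x"
proof -
  have a: "\<Phi> (s*x) \<le> (s*x) * \<phi> (s*x)" using yf_Phi_le[OF assms(1)] assms by simp
  have b: "(x - s*x) * \<phi> (s*x) \<le> \<Phi> x - \<Phi> (s*x)"
    using yf_diff_bounds(1)[OF assms(1), of "s*x" x] assms by (simp add: mult_left_le_one_le)
  have p: "0 \<le> \<phi> (s*x)" using yf_basic(3)[OF assms(1)] assms by simp
  have "(1 - s) * \<Phi> (s*x) \<le> (1-s) * ((s*x) * \<phi> (s*x))"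
    using a assms by (intro mult_left_mono) auto
  also have "\<dots> = s * ((x - s*x) * \<phi> (s*x))" by (simp add: algebra_simps)
  also have "\<dots> \<le> s * (\<Phi> x - \<Phi> (s*x))" using b assms by (intro mult_left_mono) auto
  finally show ?thesis by (simp add: algebra_simps)
qed

lemma yf_Phi_cont: assumes "young_function \<phi> \<Phi>" shows "continuous_on {0..} \<Phi>"
proof (rule continuous_onI)
  fix x e :: real assume x: "x \<in> {0..}" and e: "0 < e"
  define d where "d = min 1 (e / (\<phi> (x+1) + 1))"
  have p1: "0 \<le> \<phi> (x+1)" using yf_basic(3)[OF assms] x by simp
  have d: "0 < d" using e p1 by (simp add: d_def)
  show "\<exists>d>0. \<forall>x'\<in>{0..}. dist x' x < d \<longrightarrow> dist (\<Phi> x') (\<Phi> x) \<le> e"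
  proof (intro exI[of _ d] conjI ballI impI d)
    fix y assume y: "y \<in> {0..}" "dist y x < d"
    have yx: "\<bar>y - x\<bar> < d" using y by (simp add: dist_real_def)
    have pm: "\<And>z. 0 \<le> z \<Longrightarrow> z \<le> x+1 \<Longrightarrow> \<phi> z \<le> \<phi> (x+1)"
      using yf_basic(1)[OF assms] x by (auto intro: mono_onD)
    have "d * \<phi> (x+1) \<le> e"
    proof -
      have "d * (\<phi> (x+1) + 1) \<le> e" using e p1 unfolding d_def
        by (smt (verit) divide_pos_pos min.cobounded2 mult_right_mono nonzero_eq_divide_eq)
      thus ?thesis using d by (smt (verit) mult_left_mono distrib_left)
    qed
    moreover have "\<bar>\<Phi> y - \<Phi> x\<bar> \<le> \<bar>y - x\<bar> * \<phi> (x+1)"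
    proof (cases "x \<le> y")
      case True
      have "\<Phi> y - \<Phi> x \<le> (y - x) * \<phi> y" using yf_diff_bounds(2)[OF assms _ True] x by simp
      also have "\<dots> \<le> (y-x) * \<phi> (x+1)" using True yx d_def pm[of y] y
        by (intro mult_left_mono) auto
      finally show ?thesis using yf_Phi_mono[OF assms _ True] x True by simp
    next
      case False
      have "\<Phi> x - \<Phi> y \<le> (x - y) * \<phi> x" using yf_diff_bounds(2)[OF assms, of y x] y False by simp
      also have "\<dots> \<le> (x-y) * \<phi> (x+1)" using False pm[of x] x
        by (intro mult_left_mono) auto
      finally show ?thesis using yf_Phi_mono[OF assms, of y x] y False by simp
    qed
    moreover have "\<bar>y - x\<bar> * \<phi> (x+1) \<le> d * \<phi> (x+1)"
      using yx p1 by (intro mult_right_mono) auto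
    ultimately show "dist (\<Phi> y) (\<Phi> x) \<le> e" by (simp add: dist_real_def)
  qed
qed


lemma yc_bdd:
  assumes "young_function \<phi> \<Phi>"
  shows "bdd_above ((\<lambda>s. s * t - \<Phi> s) ` {0..})"
proof -
  obtain Bd where Bd: "\<And>s. 0 \<le> s \<Longrightarrow> s * t - \<Phi> s \<le> Bd"
  proof (cases "t \<le> 0")
    case True
    have "s * t - \<Phi> s \<le> 0" if s: "0 \<le> s" for s
    proof -
      have "s * t \<le> 0" using s True by (simp add: mult_nonneg_nonpos)
      moreover have "0 \<le> \<Phi> s" using yf_Phi_nonneg[OF assms s] .
      ultimately show ?thesis by linarith
    qed
    thus ?thesis using that by blast
  next
    case False
    have "\<forall>\<^sub>F x in at_top. t + 1 \<le> \<phi> x"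
      using yf_basic(5)[OF assms] by (simp add: filterlim_at_top)
    then obtain s0 where s0: "\<And>x. x \<ge> s0 \<Longrightarrow> t + 1 \<le> \<phi> x" by (auto simp: eventually_at_top_linorder)
    define s1 where "s1 = max 0 s0"
    have s1: "0 \<le> s1" "t + 1 \<le> \<phi> s1" using s0 by (auto simp: s1_def)
    have "s * t - \<Phi> s \<le> s1 * (t + 1)" if s: "0 \<le> s" for s
    proof (cases "s \<le> s1")
      case True
      have "s * t \<le> s1 * t" using True False by (simp add: mult_right_mono)
      moreover have "0 \<le> \<Phi> s" using yf_Phi_nonneg[OF assms s] .
      moreover have "s1 * t \<le> s1 * (t+1)" using s1(1) by (simp add: mult_left_mono)
      ultimately show ?thesis by linarith
    next
      case F: False
      have a: "(s - s1) * \<phi> s1 \<le> \<Phi> s - \<Phi> s1" using yf_diff_bounds(1)[OF assms s1(1)] F by simp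
      have b: "(s - s1) * (t+1) \<le> (s - s1) * \<phi> s1" using F s1 by (intro mult_left_mono) auto
      have c: "0 \<le> \<Phi> s1" using yf_Phi_nonneg[OF assms s1(1)] .
      have d: "(s - s1) * (t+1) = s * t + s - s1 * (t+1)" by (simp add: algebra_simps)
      show ?thesis using a b c d F s1 by linarith
    qed
    thus ?thesis using that by blast
  qed
  show ?thesis by (rule bdd_aboveI[of _ Bd]) (use Bd in auto)
qed


lemma young_ineq:
  assumes "young_function \<phi> \<Phi>" "0 \<le> s"
  shows "s * t \<le> \<Phi> s + young_conj \<Phi> t"
proof -
  have "s * t - \<Phi> s \<le> young_conj \<Phi> t" unfolding young_conj_def
    by (rule cSUP_upper[OF _ yc_bdd[OF assms(1)]]) (use assms(2) in simp)
  thus ?thesis by simp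
qed

lemma yc_nonneg: assumes "young_function \<phi> \<Phi>" shows "0 \<le> young_conj \<Phi> t"
  using young_ineq[OF assms, of 0 t] yf_Phi0[OF assms] by simp

lemma yc_le:
  assumes "young_function \<phi> \<Phi>" "\<And>s. 0 \<le> s \<Longrightarrow> s * t - \<Phi> s \<le> B"
  shows "young_conj \<Phi> t \<le> B"
  unfolding young_conj_def
proof (rule cSUP_least)
  show "{0::real..} \<noteq> {}" by simp
  fix s :: real assume "s \<in> {0..}" thus "s * t - \<Phi> s \<le> B" using assms(2) by simp
qed

lemma yc_mono: assumes "young_function \<phi> \<Phi>" "t \<le> t'" shows "young_conj \<Phi> t \<le> young_conj \<Phi> t'"
proof (rule yc_le[OF assms(1)])
  fix s :: real assume s: "0 \<le> s"
  have "s * t \<le> s * t'" using mult_left_mono[OF assms(2) s] .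
  thus "s * t - \<Phi> s \<le> young_conj \<Phi> t'" using young_ineq[OF assms(1) s, of t'] by simp
qed

lemma yc_mono': assumes "young_function \<phi> \<Phi>" shows "mono (young_conj \<Phi>)"
  using yc_mono[OF assms] by (auto intro: monoI)

lemma yc_scale:
  assumes "young_function \<phi> \<Phi>" "1 \<le> l"
  shows "young_conj \<Phi> (t / l) \<le> young_conj \<Phi> t / l"
proof (rule yc_le[OF assms(1)])
  fix s :: real assume s: "0 \<le> s"
  have "s * t - \<Phi> s \<le> young_conj \<Phi> t" using young_ineq[OF assms(1) s, of t] by simp
  hence "(s * t - \<Phi> s) / l \<le> young_conj \<Phi> t / l" using assms by (simp add: divide_right_mono)
  moreover have "s * (t / l) - \<Phi> s \<le> (s * t - \<Phi> s) / l"
  proof -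
    have "\<Phi> s / l \<le> \<Phi> s" using yf_Phi_nonneg[OF assms(1) s] assms(2)
      by (simp add: divide_le_eq mult_le_cancel_left1)
    thus ?thesis by (simp add: diff_divide_distrib)
  qed
  ultimately show "s * (t / l) - \<Phi> s \<le> young_conj \<Phi> t / l" by simp
qed

lemma yc_phi:
  assumes "young_function \<phi> \<Phi>" "0 \<le> x"
  shows "young_conj \<Phi> (\<phi> x) \<le> \<Phi> (2 * x)"
proof (rule yc_le[OF assms(1)])
  fix s :: real assume s: "0 \<le> s"
  have "s * \<phi> x - \<Phi> s \<le> x * \<phi> x - \<Phi> x"
  proof (cases "x \<le> s")
    case True
    then show ?thesis using yf_diff_bounds(1)[OF assms True] by (simp add: algebra_simps)
  next
    case False
    then show ?thesis using yf_diff_bounds(2)[OF assms(1) s, of x] by (simp add: algebra_simps)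
  qed
  also have "\<dots> \<le> \<Phi> (2*x)" using yf_phi_le[OF assms] yf_Phi_nonneg[OF assms] by simp
  finally show "s * \<phi> x - \<Phi> s \<le> \<Phi> (2 * x)" .
qed


lemma delta2_iter:
  assumes "young_function \<phi> \<Phi>" "Delta2 \<Phi>"
  shows "\<exists>K>0. \<forall>j::nat. \<exists>C\<ge>0. \<forall>t\<ge>0. \<Phi> (2^j * t) \<le> K^j * \<Phi> t + C"
proof -
  obtain K t0 where K: "K > 0" "t0 \<ge> 0" "\<And>t. t \<ge> t0 \<Longrightarrow> \<Phi> (2*t) \<le> K * \<Phi> t"
    using assms(2) unfolding Delta2_def by auto
  have "\<exists>C\<ge>0. \<forall>t\<ge>0. \<Phi> (2^j * t) \<le> K^j * \<Phi> t + C" for j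
  proof (induction j)
    case 0 show ?case by auto
  next
    case (Suc j)
    then obtain C where C: "C \<ge> 0" "\<And>t. t \<ge> 0 \<Longrightarrow> \<Phi> (2^j * t) \<le> K^j * \<Phi> t + C" by auto
    have p2: "0 \<le> \<Phi> (2*t0)" using yf_Phi_nonneg[OF assms(1)] K by simp
    show ?case
    proof (intro exI[of _ "K * C + \<Phi> (2*t0)"] conjI allI impI)
      show "0 \<le> K * C + \<Phi> (2*t0)" using K C p2 by simp
      fix t :: real assume t: "t \<ge> 0"
      have e: "2^Suc j * t = 2 * (2^j * t)" by simp
      show "\<Phi> (2 ^ Suc j * t) \<le> K ^ Suc j * \<Phi> t + (K * C + \<Phi> (2 * t0))"
      proof (cases "2^j * t \<ge> t0")
        case True
        have "\<Phi> (2 ^ Suc j * t) \<le> K * \<Phi> (2^j*t)" unfolding e by (rule K(3)[OF True])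
        also have "\<dots> \<le> K * (K^j * \<Phi> t + C)" using C(2)[OF t] K by (intro mult_left_mono) auto
        finally show ?thesis using p2 by (simp add: algebra_simps)
      next
        case False
        have "\<Phi> (2 ^ Suc j * t) \<le> \<Phi> (2*t0)" unfolding e
          by (rule yf_Phi_mono[OF assms(1)]) (use False t in auto)
        moreover have "0 \<le> K ^ Suc j * \<Phi> t" using yf_Phi_nonneg[OF assms(1) t] K by simp
        ultimately show ?thesis using K C by (smt (verit) mult_nonneg_nonneg)
      qed
    qed
  qed
  thus ?thesis using K by auto
qed

lemma delta2_mult:
  assumes "young_function \<phi> \<Phi>" "Delta2 \<Phi>" "0 \<le> m"
  shows "\<exists>A\<ge>0. \<exists>C\<ge>0. \<forall>t\<ge>0. \<Phi> (m * t) \<le> A * \<Phi> t + C"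
proof -
  obtain K where K: "K > 0" "\<And>j::nat. \<exists>C\<ge>0. \<forall>t\<ge>0. \<Phi> (2^j * t) \<le> K^j * \<Phi> t + C"
    using delta2_iter[OF assms(1,2)] by auto
  obtain j :: nat where j: "m \<le> 2^j"
    using real_arch_pow[of 2 m] by (meson less_imp_le one_less_numeral_iff semiring_norm(76))
  obtain C where C: "C \<ge> 0" "\<And>t. t \<ge> 0 \<Longrightarrow> \<Phi> (2^j * t) \<le> K^j * \<Phi> t + C" using K(2)[of j] by auto
  have "\<Phi> (m * t) \<le> K ^ j * \<Phi> t + C" if t: "0 \<le> t" for t
  proof -
    have "\<Phi> (m*t) \<le> \<Phi> (2^j * t)" using j t assms(3) mult_right_mono[OF j t] by (intro yf_Phi_mono[OF assms(1)]) auto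
    thus ?thesis using C(2)[OF t] by simp
  qed
  moreover have "0 \<le> K^j" using K by simp
  ultimately show ?thesis using C(1) by blast
qed

lemma phi_double:
  assumes "young_function \<phi> \<Phi>" "Delta2 \<Phi>"
  shows "\<exists>A\<ge>0. \<exists>C\<ge>0. \<forall>t\<ge>1. \<phi> (2 * t) \<le> A * \<phi> t + C"
proof -
  obtain A C where AC: "A \<ge> 0" "C \<ge> 0" "\<And>t. t \<ge> 0 \<Longrightarrow> \<Phi> (4 * t) \<le> A * \<Phi> t + C"
    using delta2_mult[OF assms, of 4] by auto
  have "\<phi> (2 * t) \<le> A * \<phi> t + C" if t: "1 \<le> t" for t
  proof -
    have "(2*t) * \<phi> (2*t) \<le> \<Phi> (2*(2*t))" using yf_phi_le[OF assms(1), of "2*t"] t by simp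
    also have "\<dots> \<le> A * \<Phi> t + C" using AC(3)[of t] t by simp
    also have "\<dots> \<le> A * (t * \<phi> t) + C" using yf_Phi_le[OF assms(1), of t] t AC by (simp add: mult_left_mono)
    finally have *: "2 * t * \<phi> (2 * t) \<le> A * (t * \<phi> t) + C" .
    have p: "0 \<le> \<phi> t" using yf_basic(3)[OF assms(1)] t by simp
    have "t * \<phi> (2*t) \<le> t * (A * \<phi> t + C)"
    proof -
      have "t * \<phi> (2*t) \<le> 2 * t * \<phi> (2 * t)" using yf_basic(3)[OF assms(1), of "2*t"] t by simp
      also have "\<dots> \<le> A * (t * \<phi> t) + C" by (rule *)
      also have "\<dots> \<le> t * (A * \<phi> t + C)"
      proof -
        have "C \<le> t * C" using t AC by (simp add: mult_le_cancel_right1)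
        thus ?thesis by (simp add: algebra_simps)
      qed
      finally show ?thesis .
    qed
    thus "\<phi> (2 * t) \<le> A * \<phi> t + C" using t by (simp add: mult_le_cancel_left_pos)
  qed
  thus ?thesis using AC by blast
qed


definition goodG :: "(real \<Rightarrow> real) \<Rightarrow> bool" where
  "goodG G \<longleftrightarrow> (\<forall>x y. 0 \<le> x \<longrightarrow> x \<le> y \<longrightarrow> G x \<le> G y) \<and> (\<forall>t\<ge>0. 0 \<le> G t) \<and>
     (\<forall>t\<ge>0. \<forall>l\<ge>1. G (t / l) \<le> G t / l)"

lemma goodG_Phi: assumes "young_function \<phi> \<Phi>" shows "goodG \<Phi>"
  unfolding goodG_def
proof (intro conjI allI impI)
  fix t l :: real assume t: "0 \<le> t" and l: "1 \<le> l"
  have "\<Phi> ((1/l) * t) \<le> (1/l) * \<Phi> t" using yf_Phi_scale[OF assms t, of "1/l"] l by simp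
  thus "\<Phi> (t / l) \<le> \<Phi> t / l" by simp
qed (use yf_Phi_mono[OF assms] yf_Phi_nonneg[OF assms] in auto)

lemma goodG_yc: assumes "young_function \<phi> \<Phi>" shows "goodG (young_conj \<Phi>)"
  unfolding goodG_def using yc_mono[OF assms] yc_nonneg[OF assms] yc_scale[OF assms] by auto

lemma mono0_meas:
  fixes h :: "real \<Rightarrow> real"
  assumes "\<And>x y. 0 \<le> x \<Longrightarrow> x \<le> y \<Longrightarrow> h x \<le> h y"
    and g: "g \<in> borel_measurable X" and "\<And>z. z \<in> space X \<Longrightarrow> 0 \<le> g z"
  shows "(\<lambda>z. h (g z)) \<in> borel_measurable X"
proof -
  define h' where "h' t = h (max 0 t)" for t
  have "mono h'" unfolding h'_def by (auto intro!: monoI assms(1))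
  hence "h' \<in> borel_measurable borel" by (rule borel_measurable_mono)
  hence "(\<lambda>z. h' (g z)) \<in> borel_measurable X" using g by measurable
  thus ?thesis by (rule measurable_cong[THEN iffD1, rotated]) (use assms(3) in \<open>auto simp: h'_def\<close>)
qed

lemma goodG_meas:
  assumes "goodG G" "g \<in> borel_measurable X" "\<And>z. z \<in> space X \<Longrightarrow> 0 \<le> g z"
  shows "(\<lambda>z. G (g z)) \<in> borel_measurable X"
  using mono0_meas[of G g X] assms unfolding goodG_def by blast

lemma goodG_mono: "goodG G \<Longrightarrow> 0 \<le> x \<Longrightarrow> x \<le> y \<Longrightarrow> G x \<le> G y"
  unfolding goodG_def by blast
lemma goodG_nonneg: "goodG G \<Longrightarrow> 0 \<le> x \<Longrightarrow> 0 \<le> G x"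
  unfolding goodG_def by blast
lemma goodG_scale: "goodG G \<Longrightarrow> 0 \<le> x \<Longrightarrow> 1 \<le> l \<Longrightarrow> G (x / l) \<le> G x / l"
  unfolding goodG_def by blast

lemma orlicz_meas: "u \<in> orlicz X G \<Longrightarrow> u \<in> borel_measurable X"
  unfolding orlicz_def by auto

lemma Gu_meas:
  assumes "goodG G" "u \<in> borel_measurable X" "0 \<le> k"
  shows "(\<lambda>z. G (\<bar>u z\<bar> / k)) \<in> borel_measurable X"
  by (rule goodG_meas[OF assms(1)]) (use assms(2,3) in auto)


lemma orlicz_ex_le1:
  assumes G: "goodG G" and u: "u \<in> orlicz X G"
  shows "\<exists>k>0. (\<integral>\<^sup>+ z. ennreal (G (\<bar>u z\<bar> / k)) \<partial>X) \<le> 1"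
proof -
  obtain k0 where k0: "k0 > 0" "(\<integral>\<^sup>+ z. ennreal (G (\<bar>u z\<bar> / k0)) \<partial>X) < \<infinity>"
    using u unfolding orlicz_def by auto
  define I where "I = (\<integral>\<^sup>+ z. ennreal (G (\<bar>u z\<bar> / k0)) \<partial>X)"
  define l where "l = max 1 (enn2real I)"
  have l: "1 \<le> l" unfolding l_def by simp
  have I1: "I = ennreal (enn2real I)" using k0(2) unfolding I_def by (simp add: less_top)
  have "enn2real I \<le> l" unfolding l_def by simp
  hence Il: "I \<le> ennreal l" using I1 by (metis ennreal_leI)
  have "(\<integral>\<^sup>+ z. ennreal (G (\<bar>u z\<bar> / (k0 * l))) \<partial>X) \<le> (\<integral>\<^sup>+ z. ennreal (1/l) * ennreal (G (\<bar>u z\<bar> / k0)) \<partial>X)"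
  proof (rule nn_integral_mono)
    fix z
    have "G (\<bar>u z\<bar> / (k0 * l)) = G ((\<bar>u z\<bar> / k0) / l)" by (simp add: divide_divide_eq_left)
    also have "\<dots> \<le> G (\<bar>u z\<bar> / k0) / l" by (rule goodG_scale[OF G _ l]) (use k0 in auto)
    finally show "ennreal (G (\<bar>u z\<bar> / (k0 * l))) \<le> ennreal (1/l) * ennreal (G (\<bar>u z\<bar> / k0))"
      using l goodG_nonneg[OF G, of "\<bar>u z\<bar> / k0"] k0
      by (simp add: ennreal_mult'[symmetric] ennreal_leI)
  qed
  also have "\<dots> = ennreal (1/l) * I" unfolding I_def
    by (rule nn_integral_cmult) (use Gu_meas[OF G orlicz_meas[OF u], of k0] k0 in auto)
  also have "\<dots> \<le> ennreal (1/l) * ennreal l" using Il by (rule mult_left_mono) auto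
  also have "\<dots> = 1" using l by (simp add: ennreal_mult'[symmetric])
  finally show ?thesis using k0 l by (intro exI[of _ "k0*l"]) auto
qed


lemma nn_fin_integrable:
  assumes "g \<in> borel_measurable X" "\<And>z. z \<in> space X \<Longrightarrow> 0 \<le> g z"
    "(\<integral>\<^sup>+ z. ennreal (g z) \<partial>X) \<le> ennreal B" "0 \<le> B"
  shows "integrable X g" "integral\<^sup>L X g \<le> B"
proof -
  have fin: "(\<integral>\<^sup>+ z. ennreal (g z) \<partial>X) < \<infinity>"
    by (rule le_less_trans[OF assms(3)]) simp
  have ae: "AE z in X. 0 \<le> g z" using assms(2) by (rule AE_I2)
  have eq: "(\<integral>\<^sup>+ z. ennreal (g z) \<partial>X) = ennreal (enn2real (\<integral>\<^sup>+ z. ennreal (g z) \<partial>X))"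
    using fin by (simp add: less_top)
  show i: "integrable X g"
    by (rule integrableI_nn_integral_finite[OF assms(1) ae eq])
  have "ennreal (integral\<^sup>L X g) \<le> ennreal B"
    using nn_integral_eq_integral[OF i ae] assms(3) by simp
  thus "integral\<^sup>L X g \<le> B" using ennreal_le_iff[OF assms(4)] by blast
qed

definition luxS where "luxS X G u = {k. k > 0 \<and> (\<integral>\<^sup>+ z. ennreal (G (\<bar>u z\<bar> / k)) \<partial>X) \<le> 1}"

lemma lux_props:
  assumes G: "goodG G" and u: "u \<in> orlicz X G"
  shows "0 \<le> lux_norm X G u"
    and "\<And>a. lux_norm X G u < a \<Longrightarrow> (\<integral>\<^sup>+ z. ennreal (G (\<bar>u z\<bar> / a)) \<partial>X) \<le> 1"
    and "\<And>a. 0 < a \<Longrightarrow> (\<integral>\<^sup>+ z. ennreal (G (\<bar>u z\<bar> / a)) \<partial>X) \<le> 1 \<Longrightarrow> lux_norm X G u \<le> a"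
proof -
  have ne: "luxS X G u \<noteq> {}" using orlicz_ex_le1[OF G u] unfolding luxS_def by auto
  have bdd: "bdd_below (luxS X G u)" unfolding luxS_def by (rule bdd_belowI[of _ 0]) auto
  have eq: "lux_norm X G u = Inf (luxS X G u)" unfolding lux_norm_def luxS_def by simp
  show "0 \<le> lux_norm X G u" unfolding eq by (rule cInf_greatest[OF ne]) (auto simp: luxS_def)
  show "lux_norm X G u \<le> a" if "0 < a" "(\<integral>\<^sup>+ z. ennreal (G (\<bar>u z\<bar> / a)) \<partial>X) \<le> 1" for a
    unfolding eq by (rule cInf_lower[OF _ bdd]) (use that in \<open>auto simp: luxS_def\<close>)
  show "(\<integral>\<^sup>+ z. ennreal (G (\<bar>u z\<bar> / a)) \<partial>X) \<le> 1" if lt: "lux_norm X G u < a" for a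
  proof -
    obtain k where k: "k \<in> luxS X G u" "k < a" using cInf_lessD[OF ne, of a] lt eq by auto
    have "(\<integral>\<^sup>+ z. ennreal (G (\<bar>u z\<bar> / a)) \<partial>X) \<le> (\<integral>\<^sup>+ z. ennreal (G (\<bar>u z\<bar> / k)) \<partial>X)"
    proof (rule nn_integral_mono)
      fix z
      have "\<bar>u z\<bar> / a \<le> \<bar>u z\<bar> / k" using k by (auto simp: luxS_def intro: divide_left_mono)
      thus "ennreal (G (\<bar>u z\<bar> / a)) \<le> ennreal (G (\<bar>u z\<bar> / k))"
        using goodG_mono[OF G] k by (auto simp: luxS_def intro!: ennreal_leI)
    qed
    also have "\<dots> \<le> 1" using k by (auto simp: luxS_def)
    finally show ?thesis .
  qed
qed


lemma le_from_right_limit: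
  fixes I A B :: real
  assumes "\<And>d. 0 < d \<Longrightarrow> I \<le> 2 * (A + d) * (B + d)"
  shows "I \<le> 2 * A * B"
proof -
  have lim: "((\<lambda>d. 2 * (A + d) * (B + d)) \<longlongrightarrow> 2 * (A + 0) * (B + 0)) (at_right (0::real))"
    by (intro tendsto_intros tendsto_ident_at)
  have ev: "eventually (\<lambda>d. I \<le> 2 * (A + d) * (B + d)) (at_right (0::real))"
    by (rule eventually_at_rightI[of 0 1]) (use assms in auto)
  have "I \<le> 2 * (A + 0) * (B + 0)"
    by (rule tendsto_le[OF _ lim tendsto_const ev]) simp
  thus ?thesis by simp
qed

lemma holder_ab:
  assumes Y: "young_function \<phi> \<Phi>"
    and u: "u \<in> orlicz X (young_conj \<Phi>)" and h: "h \<in> orlicz X \<Phi>"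
    and a: "lux_norm X (young_conj \<Phi>) u < a" and b: "lux_norm X \<Phi> h < b"
  shows "integrable X (\<lambda>z. u z * h z)" "(\<integral>z. \<bar>u z * h z\<bar> \<partial>X) \<le> 2 * a * b"
proof -
  have Gc: "goodG (young_conj \<Phi>)" by (rule goodG_yc[OF Y])
  have Gp: "goodG \<Phi>" by (rule goodG_Phi[OF Y])
  have a0: "0 < a" using lux_props(1)[OF Gc u] a by linarith
  have b0: "0 < b" using lux_props(1)[OF Gp h] b by linarith
  have um: "u \<in> borel_measurable X" and hm: "h \<in> borel_measurable X"
    using u h by (auto intro: orlicz_meas)
  define g1 where "g1 z = young_conj \<Phi> (\<bar>u z\<bar> / a)" for z
  define g2 where "g2 z = \<Phi> (\<bar>h z\<bar> / b)" for z
  have g1m: "g1 \<in> borel_measurable X" unfolding g1_def using Gu_meas[OF Gc um, of a] a0 by simp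
  have g2m: "g2 \<in> borel_measurable X" unfolding g2_def using Gu_meas[OF Gp hm, of b] b0 by simp
  have e1: "(\<integral>\<^sup>+z. ennreal (g1 z) \<partial>X) \<le> ennreal 1"
    using lux_props(2)[OF Gc u a] by (simp add: g1_def)
  have n1: "\<And>z. z \<in> space X \<Longrightarrow> 0 \<le> g1 z" unfolding g1_def using goodG_nonneg[OF Gc] a0 by simp
  have e2: "(\<integral>\<^sup>+z. ennreal (g2 z) \<partial>X) \<le> ennreal 1"
    using lux_props(2)[OF Gp h b] by (simp add: g2_def)
  have n2: "\<And>z. z \<in> space X \<Longrightarrow> 0 \<le> g2 z" unfolding g2_def using goodG_nonneg[OF Gp] b0 by simp
  have g1i: "integrable X g1" "integral\<^sup>L X g1 \<le> 1"
    using nn_fin_integrable[OF g1m n1 e1] by simp_all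
  have g2i: "integrable X g2" "integral\<^sup>L X g2 \<le> 1"
    using nn_fin_integrable[OF g2m n2 e2] by simp_all
  have pw: "\<bar>u z * h z\<bar> \<le> a * b * (g1 z + g2 z)" for z
  proof -
    have "(\<bar>h z\<bar> / b) * (\<bar>u z\<bar> / a) \<le> \<Phi> (\<bar>h z\<bar> / b) + young_conj \<Phi> (\<bar>u z\<bar> / a)"
      by (rule young_ineq[OF Y]) (use b0 in simp)
    hence "a * b * ((\<bar>h z\<bar> / b) * (\<bar>u z\<bar> / a)) \<le> a * b * (g1 z + g2 z)"
      unfolding g1_def g2_def using a0 b0 by (intro mult_left_mono) auto
    moreover have "a * b * ((\<bar>h z\<bar> / b) * (\<bar>u z\<bar> / a)) = \<bar>u z * h z\<bar>"
      using a0 b0 by (simp add: abs_mult)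
    ultimately show ?thesis by simp
  qed
  have bi: "integrable X (\<lambda>z. a * b * (g1 z + g2 z))" using g1i g2i by auto
  show i: "integrable X (\<lambda>z. u z * h z)"
  proof (rule Bochner_Integration.integrable_bound[OF bi])
    show "(\<lambda>z. u z * h z) \<in> borel_measurable X" using um hm by measurable
    show "AE x in X. norm (u x * h x) \<le> norm (a * b * (g1 x + g2 x))"
    proof (rule AE_I2)
      fix x
      have "0 \<le> g1 x + g2 x" unfolding g1_def g2_def
        using goodG_nonneg[OF Gc, of "\<bar>u x\<bar> / a"] goodG_nonneg[OF Gp, of "\<bar>h x\<bar> / b"] a0 b0 by simp
      thus "norm (u x * h x) \<le> norm (a * b * (g1 x + g2 x))" using pw[of x] a0 b0 by simp
    qed
  qed
  have "(\<integral>z. \<bar>u z * h z\<bar> \<partial>X) \<le> (\<integral>z. a * b * (g1 z + g2 z) \<partial>X)"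
    by (rule Bochner_Integration.integral_mono[OF _ bi pw]) (use i in auto)
  also have "\<dots> = a * b * (integral\<^sup>L X g1 + integral\<^sup>L X g2)"
    using g1i g2i by simp
  also have "\<dots> \<le> a * b * 2" using g1i g2i a0 b0 by (intro mult_left_mono) auto
  finally show "(\<integral>z. \<bar>u z * h z\<bar> \<partial>X) \<le> 2 * a * b" by simp
qed

lemma holder:
  assumes Y: "young_function \<phi> \<Phi>"
    and u: "u \<in> orlicz X (young_conj \<Phi>)" and h: "h \<in> orlicz X \<Phi>"
  shows "integrable X (\<lambda>z. u z * h z)"
    "(\<integral>z. \<bar>u z * h z\<bar> \<partial>X) \<le> 2 * lux_norm X (young_conj \<Phi>) u * lux_norm X \<Phi> h"
proof -
  show "integrable X (\<lambda>z. u z * h z)" using holder_ab(1)[OF Y u h, of "lux_norm X (young_conj \<Phi>) u + 1" "lux_norm X \<Phi> h + 1"] by simp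
  show "(\<integral>z. \<bar>u z * h z\<bar> \<partial>X) \<le> 2 * lux_norm X (young_conj \<Phi>) u * lux_norm X \<Phi> h"
    by (rule le_from_right_limit) (rule holder_ab(2)[OF Y u h]; simp)
qed


lemma vec_meas:
  fixes v :: "'a \<Rightarrow> real ^ 'n"
  assumes "\<And>i. (\<lambda>z. v z $ i) \<in> borel_measurable X"
  shows "v \<in> borel_measurable X"
proof -
  have eq: "v z = (\<Sum>i\<in>UNIV. (v z $ i) *\<^sub>R axis i 1)" for z
    using basis_expansion[of "v z"] by (simp add: scalar_mult_eq_scaleR)
  have "(\<lambda>z. \<Sum>i\<in>UNIV. (v z $ i) *\<^sub>R (axis i 1 :: real ^ 'n)) \<in> borel_measurable X"
    using assms by (intro borel_measurable_sum borel_measurable_scaleR) auto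
  thus ?thesis by (subst (asm) eq[symmetric]) simp
qed

lemma orliczN_meas: "v \<in> orliczN X \<Phi> \<Longrightarrow> v \<in> borel_measurable X"
  unfolding orliczN_def by (rule vec_meas) (auto intro: orlicz_meas)

lemma integrable_nn_fin:
  assumes "integrable X g" "\<And>z. 0 \<le> h z" "\<And>z. h z \<le> g z"
  shows "(\<integral>\<^sup>+ z. ennreal (h z) \<partial>X) < \<infinity>"
proof -
  have "(\<integral>\<^sup>+ z. ennreal (h z) \<partial>X) \<le> (\<integral>\<^sup>+ z. ennreal (g z) \<partial>X)"
    by (rule nn_integral_mono) (use assms(3) in \<open>simp add: ennreal_leI\<close>)
  also have "\<dots> = ennreal (integral\<^sup>L X g)"
    by (rule nn_integral_eq_integral[OF assms(1)]) (use assms(2,3) in \<open>auto intro: order_trans\<close>)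
  also have "\<dots> < \<infinity>" by simp
  finally show ?thesis .
qed

lemma orlicz_Phi_int:
  assumes Y: "young_function \<phi> \<Phi>" and D: "Delta2 \<Phi>" and X: "finite_measure X"
    and u: "u \<in> orlicz X \<Phi>" and m: "0 \<le> m"
  shows "integrable X (\<lambda>z. \<Phi> (m * \<bar>u z\<bar>))"
proof -
  have Gp: "goodG \<Phi>" by (rule goodG_Phi[OF Y])
  obtain k where k: "k > 0" "(\<integral>\<^sup>+ z. ennreal (\<Phi> (\<bar>u z\<bar> / k)) \<partial>X) \<le> 1"
    using orlicz_ex_le1[OF Gp u] by auto
  have um: "u \<in> borel_measurable X" using u by (rule orlicz_meas)
  have gm: "(\<lambda>z. \<Phi> (\<bar>u z\<bar> / k)) \<in> borel_measurable X" using Gu_meas[OF Gp um, of k] k by simp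
  have gi: "integrable X (\<lambda>z. \<Phi> (\<bar>u z\<bar> / k))"
    using nn_fin_integrable(1)[OF gm _ _, of 1] k goodG_nonneg[OF Gp] by simp
  obtain A C where AC: "A \<ge> 0" "C \<ge> 0" "\<And>t. t \<ge> 0 \<Longrightarrow> \<Phi> ((m*k) * t) \<le> A * \<Phi> t + C"
    using delta2_mult[OF Y D, of "m*k"] m k by auto
  have bi: "integrable X (\<lambda>z. A * \<Phi> (\<bar>u z\<bar> / k) + C)"
    by (intro Bochner_Integration.integrable_add integrable_mult_right gi finite_measure.integrable_const[OF X])
  show ?thesis
  proof (rule Bochner_Integration.integrable_bound[OF bi])
    show "(\<lambda>z. \<Phi> (m * \<bar>u z\<bar>)) \<in> borel_measurable X"
      by (rule goodG_meas[OF Gp]) (use um m in auto)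
    show "AE x in X. norm (\<Phi> (m * \<bar>u x\<bar>)) \<le> norm (A * \<Phi> (\<bar>u x\<bar> / k) + C)"
    proof (rule AE_I2)
      fix x
      have e: "m * \<bar>u x\<bar> = (m*k) * (\<bar>u x\<bar> / k)" using k by simp
      have "\<Phi> (m * \<bar>u x\<bar>) \<le> A * \<Phi> (\<bar>u x\<bar> / k) + C" unfolding e by (rule AC(3)) (use k in simp)
      moreover have "0 \<le> \<Phi> (m * \<bar>u x\<bar>)" using goodG_nonneg[OF Gp] m by simp
      ultimately show "norm (\<Phi> (m * \<bar>u x\<bar>)) \<le> norm (A * \<Phi> (\<bar>u x\<bar> / k) + C)" by simp
    qed
  qed
qed

lemma Phi_sum2:
  assumes Y: "young_function \<phi> \<Phi>" "0 \<le> a" "0 \<le> b"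
  shows "\<Phi> (a + b) \<le> \<Phi> (2*a) + \<Phi> (2*b)"
proof (cases "a \<le> b")
  case True
  have "\<Phi> (a+b) \<le> \<Phi> (2*b)" by (rule yf_Phi_mono[OF Y(1)]) (use assms True in auto)
  thus ?thesis using yf_Phi_nonneg[OF Y(1), of "2*a"] assms by simp
next
  case False
  have "\<Phi> (a+b) \<le> \<Phi> (2*a)" by (rule yf_Phi_mono[OF Y(1)]) (use assms False in auto)
  thus ?thesis using yf_Phi_nonneg[OF Y(1), of "2*b"] assms by simp
qed

lemma Phi_sum3:
  assumes Y: "young_function \<phi> \<Phi>" "0 \<le> a" "0 \<le> b" "0 \<le> c"
  shows "\<Phi> (a + b + c) \<le> \<Phi> (3*a) + \<Phi> (3*b) + \<Phi> (3*c)"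
proof -
  have n: "0 \<le> \<Phi> (3*a)" "0 \<le> \<Phi> (3*b)" "0 \<le> \<Phi> (3*c)"
    using yf_Phi_nonneg[OF Y(1)] assms by auto
  consider "b \<le> a \<and> c \<le> a" | "a \<le> b \<and> c \<le> b" | "a \<le> c \<and> b \<le> c" by linarith
  then show ?thesis
  proof cases
    case 1
    have "\<Phi> (a+b+c) \<le> \<Phi> (3*a)" by (rule yf_Phi_mono[OF Y(1)]) (use assms 1 in auto)
    thus ?thesis using n by linarith
  next
    case 2
    have "\<Phi> (a+b+c) \<le> \<Phi> (3*b)" by (rule yf_Phi_mono[OF Y(1)]) (use assms 2 in auto)
    thus ?thesis using n by linarith
  next
    case 3
    have "\<Phi> (a+b+c) \<le> \<Phi> (3*c)" by (rule yf_Phi_mono[OF Y(1)]) (use assms 3 in auto)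
    thus ?thesis using n by linarith
  qed
qed

lemma Phi_norm_sum:
  fixes x :: "real ^ 'n"
  assumes Y: "young_function \<phi> \<Phi>" and m: "0 \<le> m"
  shows "\<Phi> (m * norm x) \<le> (\<Sum>i\<in>UNIV. \<Phi> (m * real CARD('n) * \<bar>x $ i\<bar>))"
proof -
  define S where "S = (\<lambda>i. \<bar>x $ i\<bar>) ` UNIV"
  have "finite S" "S \<noteq> {}" unfolding S_def by auto
  hence "Max S \<in> S" by (rule Max_in)
  hence "\<exists>i0. Max S = \<bar>x $ i0\<bar>" unfolding S_def by (metis imageE)
  then obtain i0 where i0: "Max S = \<bar>x $ i0\<bar>" by blast
  have le: "\<bar>x $ i\<bar> \<le> \<bar>x $ i0\<bar>" for i
    using Max_ge[OF \<open>finite S\<close>, of "\<bar>x $ i\<bar>"] i0 unfolding S_def by auto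
  have "norm x \<le> (\<Sum>i\<in>UNIV. \<bar>x $ i\<bar>)" by (rule norm_le_l1_cart)
  also have "\<dots> \<le> (\<Sum>i\<in>(UNIV::'n set). \<bar>x $ i0\<bar>)" by (rule sum_mono) (rule le)
  also have "\<dots> = real CARD('n) * \<bar>x $ i0\<bar>" by simp
  finally have "m * norm x \<le> m * (real CARD('n) * \<bar>x $ i0\<bar>)" using m by (rule mult_left_mono)
  hence "\<Phi> (m * norm x) \<le> \<Phi> (m * real CARD('n) * \<bar>x $ i0\<bar>)"
    by (intro yf_Phi_mono[OF Y]) (use m in \<open>auto simp: mult.assoc\<close>)
  also have "\<dots> \<le> (\<Sum>i\<in>UNIV. \<Phi> (m * real CARD('n) * \<bar>x $ i\<bar>))"
    by (rule member_le_sum) (use yf_Phi_nonneg[OF Y] m in auto)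
  finally show ?thesis .
qed

lemma orliczN_Phi_int:
  fixes v :: "'a \<Rightarrow> real ^ 'n"
  assumes Y: "young_function \<phi> \<Phi>" and D: "Delta2 \<Phi>" and X: "finite_measure X"
    and v: "v \<in> orliczN X \<Phi>" and m: "0 \<le> m"
  shows "integrable X (\<lambda>z. \<Phi> (m * norm (v z)))"
proof -
  have bi: "integrable X (\<lambda>z. \<Sum>i\<in>UNIV. \<Phi> (m * real CARD('n) * \<bar>v z $ i\<bar>))"
    using v m by (intro Bochner_Integration.integrable_sum orlicz_Phi_int[OF Y D X]) (auto simp: orliczN_def)
  show ?thesis
  proof (rule Bochner_Integration.integrable_bound[OF bi])
    show "(\<lambda>z. \<Phi> (m * norm (v z))) \<in> borel_measurable X"
      by (rule goodG_meas[OF goodG_Phi[OF Y]]) (use orliczN_meas[OF v] m in auto)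
    show "AE x in X. norm (\<Phi> (m * norm (v x))) \<le> norm (\<Sum>i\<in>UNIV. \<Phi> (m * real CARD('n) * \<bar>v x $ i\<bar>))"
    proof (rule AE_I2)
      fix x
      have "0 \<le> \<Phi> (m * norm (v x))" using yf_Phi_nonneg[OF Y] m by simp
      thus "norm (\<Phi> (m * norm (v x))) \<le> norm (\<Sum>i\<in>UNIV. \<Phi> (m * real CARD('n) * \<bar>v x $ i\<bar>))"
        using Phi_norm_sum[OF Y m, of "v x"] by simp
    qed
  qed
qed

lemma orlicz_diff:
  assumes Y: "young_function \<phi> \<Phi>" and D: "Delta2 \<Phi>" and X: "finite_measure X"
    and u: "u \<in> orlicz X \<Phi>" and w: "w \<in> orlicz X \<Phi>"
  shows "(\<lambda>z. u z - w z) \<in> orlicz X \<Phi>"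
proof -
  have bi: "integrable X (\<lambda>z. \<Phi> (2 * \<bar>u z\<bar>) + \<Phi> (2 * \<bar>w z\<bar>))"
    using orlicz_Phi_int[OF Y D X u, of 2] orlicz_Phi_int[OF Y D X w, of 2] by auto
  have "(\<integral>\<^sup>+ z. ennreal (\<Phi> (\<bar>u z - w z\<bar> / 1)) \<partial>X) < \<infinity>"
  proof (rule integrable_nn_fin[OF bi])
    fix z
    show "0 \<le> \<Phi> (\<bar>u z - w z\<bar> / 1)" using yf_Phi_nonneg[OF Y] by simp
    have "\<Phi> (\<bar>u z - w z\<bar>) \<le> \<Phi> (\<bar>u z\<bar> + \<bar>w z\<bar>)" by (rule yf_Phi_mono[OF Y]) auto
    also have "\<dots> \<le> \<Phi> (2 * \<bar>u z\<bar>) + \<Phi> (2 * \<bar>w z\<bar>)" by (rule Phi_sum2[OF Y]) auto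
    finally show "\<Phi> (\<bar>u z - w z\<bar> / 1) \<le> \<Phi> (2 * \<bar>u z\<bar>) + \<Phi> (2 * \<bar>w z\<bar>)" by simp
  qed
  moreover have "(\<lambda>z. u z - w z) \<in> borel_measurable X"
    using orlicz_meas[OF u] orlicz_meas[OF w] by measurable
  ultimately show ?thesis unfolding orlicz_def by (intro CollectI conjI exI[of _ 1]) auto
qed

lemma orliczN_diff:
  assumes Y: "young_function \<phi> \<Phi>" and D: "Delta2 \<Phi>" and X: "finite_measure X"
    and v: "v \<in> orliczN X \<Phi>" and w: "w \<in> orliczN X \<Phi>"
  shows "(\<lambda>z. v z - w z) \<in> orliczN X \<Phi>"
  using orlicz_diff[OF Y D X] v w unfolding orliczN_def by auto

lemma orlicz_small:
  assumes Y: "young_function \<phi> \<Phi>" and h: "h \<in> orlicz X \<Phi>" and m: "0 < m"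
    and lt: "lux_norm X \<Phi> h < 1 / m"
  shows "integrable X (\<lambda>z. \<Phi> (m * \<bar>h z\<bar>))" "(\<integral>z. \<Phi> (m * \<bar>h z\<bar>) \<partial>X) \<le> 1"
proof -
  have Gp: "goodG \<Phi>" by (rule goodG_Phi[OF Y])
  have e: "\<And>z. \<bar>h z\<bar> / (1/m) = m * \<bar>h z\<bar>" by simp
  have nn: "(\<integral>\<^sup>+ z. ennreal (\<Phi> (m * \<bar>h z\<bar>)) \<partial>X) \<le> ennreal 1"
    using lux_props(2)[OF Gp h lt] unfolding e by simp
  have gm: "(\<lambda>z. \<Phi> (m * \<bar>h z\<bar>)) \<in> borel_measurable X"
    by (rule goodG_meas[OF Gp]) (use orlicz_meas[OF h] m in auto)
  have n: "\<And>z. z \<in> space X \<Longrightarrow> 0 \<le> \<Phi> (m * \<bar>h z\<bar>)" using yf_Phi_nonneg[OF Y] m by simp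
  show "integrable X (\<lambda>z. \<Phi> (m * \<bar>h z\<bar>))" "(\<integral>z. \<Phi> (m * \<bar>h z\<bar>) \<partial>X) \<le> 1"
    using nn_fin_integrable[OF gm n nn] by simp_all
qed

lemma const_orlicz:
  assumes Y: "young_function \<phi> \<Phi>" and X: "finite_measure X"
  shows "(\<lambda>_. c) \<in> orlicz X (young_conj \<Phi>)"
proof -
  have "(\<integral>\<^sup>+ z. ennreal (young_conj \<Phi> (\<bar>c\<bar> / 1)) \<partial>X) < \<infinity>"
    by (rule integrable_nn_fin[OF finite_measure.integrable_const[OF X, of "young_conj \<Phi> \<bar>c\<bar>"]])
       (use yc_nonneg[OF Y] in auto)
  thus ?thesis unfolding orlicz_def by (intro CollectI conjI exI[of _ 1]) auto
qed

lemma phiU_orlicz: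
  assumes Y: "young_function \<phi> \<Phi>" and X: "finite_measure X"
    and U: "U \<in> borel_measurable X" "\<And>z. 0 \<le> U z"
    and I: "integrable X (\<lambda>z. \<Phi> (2 * U z))"
  shows "(\<lambda>z. \<phi> (U z)) \<in> orlicz X (young_conj \<Phi>)"
    "lux_norm X (young_conj \<Phi>) (\<lambda>z. \<phi> (U z)) \<le> max 1 (\<integral>z. \<Phi> (2 * U z) \<partial>X)"
proof -
  have Gc: "goodG (young_conj \<Phi>)" by (rule goodG_yc[OF Y])
  have pm: "(\<lambda>z. \<phi> (U z)) \<in> borel_measurable X"
    by (rule mono0_meas) (use yf_basic(1)[OF Y] U in \<open>auto intro: mono_onD\<close>)
  have pn: "\<And>z. 0 \<le> \<phi> (U z)" using yf_basic(3)[OF Y] U by auto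
  have key: "young_conj \<Phi> (\<bar>\<phi> (U z)\<bar>) \<le> \<Phi> (2 * U z)" for z
    using yc_phi[OF Y U(2)[of z]] pn[of z] by simp
  have "(\<integral>\<^sup>+ z. ennreal (young_conj \<Phi> (\<bar>\<phi> (U z)\<bar> / 1)) \<partial>X) < \<infinity>"
    by (rule integrable_nn_fin[OF I]) (use key yc_nonneg[OF Y] in auto)
  thus o: "(\<lambda>z. \<phi> (U z)) \<in> orlicz X (young_conj \<Phi>)"
    unfolding orlicz_def using pm by (intro CollectI conjI exI[of _ 1]) auto
  define l where "l = max 1 (\<integral>z. \<Phi> (2 * U z) \<partial>X)"
  have l: "1 \<le> l" unfolding l_def by simp
  have "(\<integral>\<^sup>+ z. ennreal (young_conj \<Phi> (\<bar>\<phi> (U z)\<bar> / l)) \<partial>X) \<le> (\<integral>\<^sup>+ z. ennreal (\<Phi> (2 * U z) / l) \<partial>X)"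
  proof (rule nn_integral_mono)
    fix z
    have "young_conj \<Phi> (\<bar>\<phi> (U z)\<bar> / l) \<le> young_conj \<Phi> (\<bar>\<phi> (U z)\<bar>) / l"
      by (rule yc_scale[OF Y l])
    also have "\<dots> \<le> \<Phi> (2 * U z) / l" using key[of z] l by (simp add: divide_right_mono)
    finally show "ennreal (young_conj \<Phi> (\<bar>\<phi> (U z)\<bar> / l)) \<le> ennreal (\<Phi> (2 * U z) / l)"
      by (rule ennreal_leI)
  qed
  also have "\<dots> = ennreal (\<integral>z. \<Phi> (2 * U z) / l \<partial>X)"
    by (rule nn_integral_eq_integral) (use I yf_Phi_nonneg[OF Y] U l in auto)
  also have "\<dots> = ennreal ((\<integral>z. \<Phi> (2 * U z) \<partial>X) / l)" by simp
  also have "\<dots> \<le> 1"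
  proof -
    have "(\<integral>z. \<Phi> (2 * U z) \<partial>X) \<le> l" unfolding l_def by simp
    moreover have "0 < l" using l by simp
    ultimately have "(\<integral>z. \<Phi> (2 * U z) \<partial>X) / l \<le> 1" by (simp add: divide_le_eq)
    thus ?thesis by (simp add: ennreal_le_1)
  qed
  finally show "lux_norm X (young_conj \<Phi>) (\<lambda>z. \<phi> (U z)) \<le> max 1 (\<integral>z. \<Phi> (2 * U z) \<partial>X)"
    using lux_props(3)[OF Gc o, of l] l unfolding l_def by simp
qed


lemma sc_convex:
  fixes g :: "'a::real_vector \<Rightarrow> real"
  assumes "strictly_convex g"
  shows "convex_on UNIV g"
proof (rule convex_onI)
  fix t x y :: _ assume t: "(0::real) < t" "t < 1"
  show "g ((1 - t) *\<^sub>R x + t *\<^sub>R y) \<le> (1 - t) * g x + t * g y"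
  proof (cases "x = y")
    case True
    then show ?thesis by (simp add: algebra_simps flip: scaleR_add_left)
  next
    case False
    then show ?thesis using assms t unfolding strictly_convex_def by (simp add: less_imp_le)
  qed
qed simp

lemma convex_lip_half:
  fixes g :: "real ^ 'n \<Rightarrow> real"
  assumes Y: "young_function \<phi> \<Phi>" and cv: "convex_on UNIV g"
    and nn: "\<And>x. 0 \<le> g x" and ub: "\<And>x. g x \<le> c2 * (1 + \<Phi> (norm x))" and c2: "0 < c2"
  shows "g b - g a \<le> c2 * (1 + 2 * \<phi> (2 * (1 + norm a + norm b))) * norm (b - a)"
proof (cases "a = b")
  case True
  then show ?thesis by simp
next
  case False
  define t where "t = 1 + norm a + norm b"
  define r where "r = norm (b - a)"
  have t1: "1 \<le> t" unfolding t_def by simp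
  have r0: "0 < r" using False unfolding r_def by simp
  define z where "z = b + (t / r) *\<^sub>R (b - a)"
  define th where "th = r / (r + t)"
  have th: "0 < th" "th < 1" using r0 t1 unfolding th_def by (auto simp: divide_less_eq)
  have comb: "(1 - th) *\<^sub>R a + th *\<^sub>R z = b"
  proof -
    have "1 - th = t / (r + t)" unfolding th_def using r0 t1 by (simp add: field_simps)
    hence "(1 - th) *\<^sub>R a + th *\<^sub>R z = (t / (r + t)) *\<^sub>R a + (r / (r+t)) *\<^sub>R (b + (t / r) *\<^sub>R (b - a))"
      unfolding th_def z_def by simp
    also have "\<dots> = (1 / (r + t)) *\<^sub>R (t *\<^sub>R a + r *\<^sub>R b + t *\<^sub>R (b - a))"
      using r0 t1 by (simp add: algebra_simps scaleR_add_right)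
    also have "\<dots> = (1 / (r + t)) *\<^sub>R ((r + t) *\<^sub>R b)" by (simp add: algebra_simps)
    also have "\<dots> = b" using r0 t1 by simp
    finally show ?thesis .
  qed
  have "g b \<le> (1 - th) * g a + th * g z"
    using convex_onD[OF cv, of th a z] th comb by simp
  hence "(r + t) * g b \<le> (r + t) * ((1 - th) * g a + th * g z)"
    using r0 t1 by (intro mult_left_mono) auto
  also have "\<dots> = t * g a + r * g z"
  proof -
    have e1: "(r + t) * (1 - th) = t" unfolding th_def using r0 t1 by (simp add: field_simps)
    have e2: "(r + t) * th = r" unfolding th_def using r0 t1 by (simp add: field_simps)
    have "(r + t) * ((1 - th) * g a + th * g z) = ((r + t) * (1 - th)) * g a + ((r + t) * th) * g z"
      by (simp add: algebra_simps)
    thus ?thesis unfolding e1 e2 .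
  qed
  finally have A: "t * (g b - g a) \<le> r * g z - r * g b" by (simp add: algebra_simps)
  have B: "r * g z - r * g b \<le> r * g z" using nn[of b] r0 by simp
  have nz: "norm z \<le> 2 * t"
  proof -
    have "norm z \<le> norm b + norm ((t / r) *\<^sub>R (b - a))" unfolding z_def by (rule norm_triangle_ineq)
    also have "norm ((t / r) *\<^sub>R (b - a)) = t" using r0 t1 unfolding r_def by simp
    finally have "norm z \<le> norm b + t" unfolding t_def by simp
    moreover have "2 * t = 2 + 2 * norm a + 2 * norm b" unfolding t_def by simp
    ultimately show ?thesis using norm_ge_zero[of a] unfolding t_def by linarith
  qed
  have "\<Phi> (norm z) \<le> \<Phi> (2 * t)" by (rule yf_Phi_mono[OF Y]) (use nz in auto)
  also have "\<dots> \<le> (2 * t) * \<phi> (2 * t)" using yf_Phi_le[OF Y, of "2*t"] t1 by simp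
  finally have C: "g z \<le> c2 * (1 + 2 * t * \<phi> (2 * t))"
    using ub[of z] c2 by (smt (verit, best) mult_left_mono)
  have "t * (g b - g a) \<le> r * (c2 * (1 + 2 * t * \<phi> (2 * t)))"
    using A B C r0 by (smt (verit, best) mult_left_mono)
  also have "\<dots> \<le> t * (c2 * (1 + 2 * \<phi> (2 * t)) * r)"
  proof -
    have "c2 * (1 + 2 * t * \<phi> (2 * t)) \<le> t * (c2 * (1 + 2 * \<phi> (2 * t)))"
      using t1 c2 by (simp add: algebra_simps mult_le_cancel_left1)
    hence "r * (c2 * (1 + 2 * t * \<phi> (2 * t))) \<le> r * (t * (c2 * (1 + 2 * \<phi> (2 * t))))"
      using r0 by (intro mult_left_mono) auto
    also have "\<dots> = t * (c2 * (1 + 2 * \<phi> (2 * t)) * r)" by (simp add: algebra_simps)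
    finally show ?thesis .
  qed
  finally have "g b - g a \<le> c2 * (1 + 2 * \<phi> (2 * t)) * r" using t1 by simp
  thus ?thesis unfolding t_def r_def .
qed

lemma convex_lip:
  fixes g :: "real ^ 'n \<Rightarrow> real"
  assumes Y: "young_function \<phi> \<Phi>" and cv: "convex_on UNIV g"
    and nn: "\<And>x. 0 \<le> g x" and ub: "\<And>x. g x \<le> c2 * (1 + \<Phi> (norm x))" and c2: "0 < c2"
  shows "\<bar>g a - g b\<bar> \<le> c2 * (1 + 2 * \<phi> (2 * (1 + norm a + norm b))) * norm (a - b)"
proof -
  have 1: "g b - g a \<le> c2 * (1 + 2 * \<phi> (2 * (1 + norm a + norm b))) * norm (a - b)"
    using convex_lip_half[OF Y cv nn ub c2, of b a] by (simp add: norm_minus_commute)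
  have 2: "g a - g b \<le> c2 * (1 + 2 * \<phi> (2 * (1 + norm a + norm b))) * norm (a - b)"
    using convex_lip_half[OF Y cv nn ub c2, of a b] by (simp add: add.commute add.left_commute)
  show ?thesis using 1 2 by linarith
qed

lemma convex_lip2:
  assumes Y: "young_function \<phi> \<Phi>" and D: "Delta2 \<Phi>" 
  obtains K where "K > 0" "\<And>(g :: real ^ 'n \<Rightarrow> real) a b c2. convex_on UNIV g \<Longrightarrow> (\<And>x. 0 \<le> g x) \<Longrightarrow>
     (\<And>x. g x \<le> c2 * (1 + \<Phi> (norm x))) \<Longrightarrow> 0 < c2 \<Longrightarrow>
     \<bar>g a - g b\<bar> \<le> c2 * K * (1 + \<phi> (1 + norm a + norm b)) * norm (a - b)"
proof -
  obtain A C where AC: "A \<ge> 0" "C \<ge> 0" "\<And>t. t \<ge> 1 \<Longrightarrow> \<phi> (2 * t) \<le> A * \<phi> t + C"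
    using phi_double[OF Y D] by auto
  define K where "K = 1 + 2 * C + 2 * A"
  have K: "K > 0" using AC unfolding K_def by simp
  show ?thesis
  proof (rule that[OF K])
    fix g :: "real ^ 'n \<Rightarrow> real" and a b :: "real ^ 'n" and c2 :: real
    assume cv: "convex_on UNIV g" and nn: "\<And>x. 0 \<le> g x"
      and ub: "\<And>x. g x \<le> c2 * (1 + \<Phi> (norm x))" and c2: "0 < c2"
    define t where "t = 1 + norm a + norm b"
    have t1: "1 \<le> t" unfolding t_def by simp
    have pt: "0 \<le> \<phi> t" using yf_basic(3)[OF Y] t1 by simp
    have "1 + 2 * \<phi> (2 * t) \<le> 1 + 2 * (A * \<phi> t + C)" using AC(3)[OF t1] by simp
    also have "\<dots> \<le> K * (1 + \<phi> t)" unfolding K_def using AC pt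
      by (simp add: algebra_simps mult_right_mono)
    finally have k: "1 + 2 * \<phi> (2 * t) \<le> K * (1 + \<phi> t)" .
    have "\<bar>g a - g b\<bar> \<le> c2 * (1 + 2 * \<phi> (2 * t)) * norm (a - b)"
      using convex_lip[OF Y cv nn ub c2, of a b] unfolding t_def .
    also have "\<dots> \<le> c2 * (K * (1 + \<phi> t)) * norm (a - b)"
      using k c2 by (intro mult_right_mono mult_left_mono) auto
    finally show "\<bar>g a - g b\<bar> \<le> c2 * K * (1 + \<phi> (1 + norm a + norm b)) * norm (a - b)"
      unfolding t_def by (simp add: mult.assoc)
  qed
qed


lemma dense_seq:
  obtains d :: "nat \<Rightarrow> 'a::euclidean_space" where "\<And>U. open U \<Longrightarrow> U \<noteq> {} \<Longrightarrow> \<exists>j. d j \<in> U"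
proof -
  obtain D :: "'a set" where D: "countable D" "D \<noteq> {}" "\<And>U. open U \<Longrightarrow> U \<noteq> {} \<Longrightarrow> \<exists>y \<in> D. y \<in> U"
    using countable_dense_exists by blast
  have r: "range (from_nat_into D) = D" using range_from_nat_into[OF D(2,1)] .
  show ?thesis
  proof (rule that)
    fix U :: "'a set" assume "open U" "U \<noteq> {}"
    then obtain y where "y \<in> D" "y \<in> U" using D(3) by blast
    thus "\<exists>j. from_nat_into D j \<in> U" using r by (metis rangeE)
  qed
qed

lemma dense_closed:
  assumes d: "\<And>U. open U \<Longrightarrow> U \<noteq> {} \<Longrightarrow> \<exists>j. d j \<in> U" and S: "closed S" and dS: "\<And>j. d j \<in> S"
  shows "x \<in> S"
proof (rule ccontr)
  assume "x \<notin> S"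
  hence "open (- S)" "- S \<noteq> {}" using S by auto
  then obtain j where "d j \<in> - S" using d by blast
  thus False using dS by auto
qed

lemma dense_approx:
  assumes d: "\<And>U. open U \<Longrightarrow> U \<noteq> {} \<Longrightarrow> \<exists>j. d j \<in> U" and e: "0 < e"
  shows "\<exists>j. dist x (d j) < e"
proof -
  obtain j where "d j \<in> ball x e" using d[of "ball x e"] e by auto
  thus ?thesis by auto
qed

lemma carath_meas:
  fixes h :: "'w \<Rightarrow> 'b::euclidean_space \<Rightarrow> real" and d :: "nat \<Rightarrow> 'b"
  assumes d: "\<And>U. open U \<Longrightarrow> U \<noteq> {} \<Longrightarrow> \<exists>j. d j \<in> U"
    and G: "G \<in> sets M" and hm: "\<And>l. (\<lambda>\<omega>. h \<omega> l) \<in> borel_measurable M"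
    and hc: "\<And>\<omega>. \<omega> \<in> G \<Longrightarrow> continuous_on UNIV (h \<omega>)"
    and s: "s \<in> measurable X M" and v: "v \<in> borel_measurable X"
  shows "(\<lambda>p. if s p \<in> G then h (s p) (v p) else 0) \<in> borel_measurable X"
proof -
  define J where "J k p = (LEAST j. dist (v p) (d j) < inverse (real (Suc k)))" for k p
  have Jp: "dist (v p) (d (J k p)) < inverse (real (Suc k))" for k p
  proof -
    have "0 < inverse (real (Suc k))" by (rule positive_imp_inverse_positive) simp
    hence "ball (v p) (inverse (real (Suc k))) \<noteq> {}" by simp
    then obtain j where "d j \<in> ball (v p) (inverse (real (Suc k)))" using d[OF open_ball] by blast
    hence "\<exists>j. dist (v p) (d j) < inverse (real (Suc k))" by auto
    thus ?thesis unfolding J_def by (rule LeastI_ex)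
  qed
  have Jm: "(\<lambda>p. J k p) \<in> measurable X (count_space UNIV)" for k
    unfolding J_def using v by measurable
  define gi where "gi i p = (if s p \<in> G then h (s p) (d i) else 0)" for i p
  have sG: "{p \<in> space X. s p \<in> G} \<in> sets X" using s G by measurable
  have gim: "(\<lambda>p. gi i p) \<in> borel_measurable X" for i
    unfolding gi_def by (rule measurable_If[OF _ _ sG]) (use measurable_compose[OF s hm] in auto)
  have cm: "(\<lambda>p. gi (J k p) p) \<in> borel_measurable X" for k
    by (rule measurable_compose_countable'[OF gim Jm]) simp
  show ?thesis
  proof (rule borel_measurable_LIMSEQ_real[OF _ cm])
    fix p assume "p \<in> space X"
    have dl: "(\<lambda>k. d (J k p)) \<longlonglongrightarrow> v p"
    proof (subst tendsto_dist_iff, rule real_tendsto_sandwich)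
      show "\<forall>\<^sub>F k in sequentially. 0 \<le> dist (d (J k p)) (v p)" by simp
      show "\<forall>\<^sub>F k in sequentially. dist (d (J k p)) (v p) \<le> inverse (real (Suc k))"
        using Jp by (simp add: dist_commute less_imp_le)
      show "(\<lambda>k. 0::real) \<longlonglongrightarrow> 0" by simp
      show "(\<lambda>k. inverse (real (Suc k))) \<longlonglongrightarrow> 0" by (rule LIMSEQ_inverse_real_of_nat)
    qed
    show "(\<lambda>k. gi (J k p) p) \<longlonglongrightarrow> (if s p \<in> G then h (s p) (v p) else 0)"
    proof (cases "s p \<in> G")
      case True
      have "isCont (h (s p)) (v p)" using hc[OF True] by (simp add: continuous_on_eq_continuous_at)
      from isCont_tendsto_compose[OF this dl] show ?thesis using True by (simp add: gi_def)
    next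
      case False
      then show ?thesis by (simp add: gi_def)
    qed
  qed
qed

lemma good_set:
  fixes f :: "'w \<Rightarrow> real ^ 'n \<Rightarrow> real"
  assumes Y: "young_function \<phi> \<Phi>"
    and H2: "AE \<omega> in M. strictly_convex (f \<omega>)"
    and c: "0 < c1" "0 < c2"
    and H3: "\<And>l. AE \<omega> in M. c1 * \<Phi> (norm l) \<le> f \<omega> l \<and> f \<omega> l \<le> c2 * (1 + \<Phi> (norm l))"
  obtains N where "N \<in> sets M" "emeasure M N = 0"
    "\<And>\<omega>. \<omega> \<in> space M - N \<Longrightarrow> convex_on UNIV (f \<omega>)"
    "\<And>\<omega>. \<omega> \<in> space M - N \<Longrightarrow> continuous_on UNIV (f \<omega>)"
    "\<And>\<omega> l. \<omega> \<in> space M - N \<Longrightarrow> 0 \<le> f \<omega> l"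
    "\<And>\<omega> l. \<omega> \<in> space M - N \<Longrightarrow> f \<omega> l \<le> c2 * (1 + \<Phi> (norm l))"
proof -
  obtain d :: "nat \<Rightarrow> real ^ 'n" where d: "\<And>U. open U \<Longrightarrow> U \<noteq> {} \<Longrightarrow> \<exists>j. d j \<in> U"
    using dense_seq by blast
  have "AE \<omega> in M. \<forall>j. c1 * \<Phi> (norm (d j)) \<le> f \<omega> (d j) \<and> f \<omega> (d j) \<le> c2 * (1 + \<Phi> (norm (d j)))"
    using H3 by (simp add: AE_all_countable)
  with H2 have "AE \<omega> in M. strictly_convex (f \<omega>) \<and>
      (\<forall>j. c1 * \<Phi> (norm (d j)) \<le> f \<omega> (d j) \<and> f \<omega> (d j) \<le> c2 * (1 + \<Phi> (norm (d j))))"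
    by (rule AE_conjI)
  then obtain N where N: "{\<omega> \<in> space M. \<not> (strictly_convex (f \<omega>) \<and>
      (\<forall>j. c1 * \<Phi> (norm (d j)) \<le> f \<omega> (d j) \<and> f \<omega> (d j) \<le> c2 * (1 + \<Phi> (norm (d j)))))} \<subseteq> N"
    "emeasure M N = 0" "N \<in> sets M" by (rule AE_E)
  have good: "strictly_convex (f \<omega>)" "\<And>j. c1 * \<Phi> (norm (d j)) \<le> f \<omega> (d j)"
     "\<And>j. f \<omega> (d j) \<le> c2 * (1 + \<Phi> (norm (d j)))" if "\<omega> \<in> space M - N" for \<omega>
    using N(1) that by blast+
  have cPhi: "continuous_on UNIV (\<lambda>l::real^'n. c2 * (1 + \<Phi> (norm l)))"
  proof -
    have "continuous_on UNIV (\<lambda>l::real^'n. \<Phi> (norm l))"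
      by (rule continuous_on_compose2[OF yf_Phi_cont[OF Y] continuous_on_norm_id]) auto
    thus ?thesis by (intro continuous_intros)
  qed
  show ?thesis
  proof (rule that[OF N(3) N(2)])
    fix \<omega> assume w: "\<omega> \<in> space M - N"
    show cv: "convex_on UNIV (f \<omega>)" by (rule sc_convex[OF good(1)[OF w]])
    show ct: "continuous_on UNIV (f \<omega>)" by (rule convex_on_continuous[OF open_UNIV cv])
    fix l
    have n0: "0 \<le> f \<omega> (d j)" for j
      using good(2)[OF w, of j] yf_Phi_nonneg[OF Y, of "norm (d j)"] c
      by (smt (verit) mult_nonneg_nonneg norm_ge_zero)
    show "0 \<le> f \<omega> l"
      using dense_closed[OF d, of "{l. 0 \<le> f \<omega> l}" l] n0
        closed_Collect_le[OF continuous_on_const ct] by auto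
    show "f \<omega> l \<le> c2 * (1 + \<Phi> (norm l))"
      using dense_closed[OF d, of "{l. f \<omega> l \<le> c2 * (1 + \<Phi> (norm l))}" l] good(3)[OF w]
        closed_Collect_le[OF ct cPhi] by auto
  qed
qed


lemma ds_props:
  assumes "dynamical_system M T"
  shows "\<And>x. T x \<in> M \<rightarrow>\<^sub>M M" "\<And>x. distr M M (T x) = M"
    "\<And>x y \<omega>. \<omega> \<in> space M \<Longrightarrow> T (x + y) \<omega> = T x (T y \<omega>)"
    "\<And>\<omega>. \<omega> \<in> space M \<Longrightarrow> T 0 \<omega> = \<omega>"
    "(\<lambda>p. T (fst p) (snd p)) \<in> (lborel \<Otimes>\<^sub>M M) \<rightarrow>\<^sub>M M"
  using assms unfolding dynamical_system_def by simp_all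

lemma Tc_meas:
  fixes T :: "real ^ 'n \<Rightarrow> 'w \<Rightarrow> 'w" and Q :: "(real ^ 'n) set"
  assumes T: "dynamical_system M T"
  shows "(\<lambda>p. T (c *\<^sub>R fst p) (snd p)) \<in> (restrict_space lborel Q \<Otimes>\<^sub>M M) \<rightarrow>\<^sub>M M"
proof -
  have a: "(\<lambda>p. (c *\<^sub>R fst p, snd p)) \<in> (restrict_space lborel Q \<Otimes>\<^sub>M M) \<rightarrow>\<^sub>M (lborel \<Otimes>\<^sub>M M)"
  proof (rule measurable_Pair)
    have "fst \<in> (restrict_space lborel Q \<Otimes>\<^sub>M M) \<rightarrow>\<^sub>M restrict_space lborel Q" by (rule measurable_fst)
    moreover have "(\<lambda>x. c *\<^sub>R x) \<in> restrict_space lborel Q \<rightarrow>\<^sub>M (lborel :: (real ^ 'n) measure)"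
    proof (rule measurable_restrict_space1)
      have "(\<lambda>x::real^'n. c *\<^sub>R x) \<in> borel_measurable borel"
        by (rule borel_measurable_continuous_onI) (intro continuous_intros)
      thus "(\<lambda>x::real^'n. c *\<^sub>R x) \<in> lborel \<rightarrow>\<^sub>M (lborel :: (real ^ 'n) measure)" by simp
    qed
    ultimately show "(\<lambda>p. c *\<^sub>R fst p) \<in> (restrict_space lborel Q \<Otimes>\<^sub>M M) \<rightarrow>\<^sub>M lborel"
      by (rule measurable_compose)
    show "snd \<in> (restrict_space lborel Q \<Otimes>\<^sub>M M) \<rightarrow>\<^sub>M M" by (rule measurable_snd)
  qed
  have "(\<lambda>p. (\<lambda>q. T (fst q) (snd q)) (c *\<^sub>R fst p, snd p)) \<in> (restrict_space lborel Q \<Otimes>\<^sub>M M) \<rightarrow>\<^sub>M M"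
    by (rule measurable_compose[OF a ds_props(5)[OF T]])
  thus ?thesis by simp
qed

lemma Phic_meas:
  fixes T :: "real ^ 'n \<Rightarrow> 'w \<Rightarrow> 'w" and Q :: "(real ^ 'n) set"
  assumes T: "dynamical_system M T"
  shows "(\<lambda>p. (fst p, T (c *\<^sub>R fst p) (snd p))) \<in> (restrict_space lborel Q \<Otimes>\<^sub>M M) \<rightarrow>\<^sub>M (restrict_space lborel Q \<Otimes>\<^sub>M M)"
  by (rule measurable_Pair[OF measurable_fst Tc_meas[OF T]])

lemma Phic_inv:
  fixes T :: "real ^ 'n \<Rightarrow> 'w \<Rightarrow> 'w" and Q :: "(real ^ 'n) set"
  assumes T: "dynamical_system M T" and p: "p \<in> space (restrict_space lborel Q \<Otimes>\<^sub>M M)"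
  shows "(\<lambda>q. (fst q, T ((- c) *\<^sub>R fst q) (snd q))) (fst p, T (c *\<^sub>R fst p) (snd p)) = p"
proof -
  have s: "snd p \<in> space M" using p unfolding space_pair_measure by (cases p) simp
  have "T (c *\<^sub>R fst p) (snd p) \<in> space M" using measurable_space[OF ds_props(1)[OF T] s] .
  have "T ((- c) *\<^sub>R fst p) (T (c *\<^sub>R fst p) (snd p)) = T ((- c) *\<^sub>R fst p + c *\<^sub>R fst p) (snd p)"
    using ds_props(3)[OF T s, of "(- c) *\<^sub>R fst p" "c *\<^sub>R fst p"] by (rule sym)
  also have "(- c) *\<^sub>R fst p + c *\<^sub>R fst p = 0" by (simp add: scaleR_left_distrib[symmetric])
  also have "T 0 (snd p) = snd p" using ds_props(4)[OF T s] .
  finally show ?thesis by simp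
qed

lemma Phic_distr:
  fixes T :: "real ^ 'n \<Rightarrow> 'w \<Rightarrow> 'w" and Q :: "(real ^ 'n) set"
  assumes T: "dynamical_system M T" and M: "prob_space M"
  shows "distr (restrict_space lborel Q \<Otimes>\<^sub>M M) (restrict_space lborel Q \<Otimes>\<^sub>M M)
           (\<lambda>p. (fst p, T (c *\<^sub>R fst p) (snd p))) = restrict_space lborel Q \<Otimes>\<^sub>M M"
    (is "distr ?X ?X ?F = ?X")
proof (rule measure_eqI)
  show "sets (distr ?X ?X ?F) = sets ?X" by simp
  interpret sigma_finite_measure M by (rule prob_space_imp_sigma_finite[OF M])
  fix A assume "A \<in> sets (distr ?X ?X ?F)"
  hence A: "A \<in> sets ?X" by simp
  have Fm: "?F \<in> ?X \<rightarrow>\<^sub>M ?X" by (rule Phic_meas[OF T])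
  have B: "?F -` A \<inter> space ?X \<in> sets ?X" using measurable_sets[OF Fm A] .
  have "emeasure (distr ?X ?X ?F) A = emeasure ?X (?F -` A \<inter> space ?X)"
    by (rule emeasure_distr[OF Fm A])
  also have "\<dots> = (\<integral>\<^sup>+x. emeasure M (Pair x -` (?F -` A \<inter> space ?X)) \<partial>restrict_space lborel Q)"
    by (rule emeasure_pair_measure_alt[OF B])
  also have "\<dots> = (\<integral>\<^sup>+x. emeasure M (Pair x -` A) \<partial>restrict_space lborel Q)"
  proof (rule nn_integral_cong)
    fix x assume x: "x \<in> space (restrict_space lborel Q)"
    have e: "Pair x -` (?F -` A \<inter> space ?X) = T (c *\<^sub>R x) -` (Pair x -` A) \<inter> space M"
      by (rule set_eqI) (use x in \<open>simp add: space_pair_measure space_restrict_space\<close>)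
    have "emeasure M (T (c *\<^sub>R x) -` (Pair x -` A) \<inter> space M) = emeasure (distr M M (T (c *\<^sub>R x))) (Pair x -` A)"
      by (rule emeasure_distr[symmetric, OF ds_props(1)[OF T]]) (rule sets_Pair1[OF A])
    also have "\<dots> = emeasure M (Pair x -` A)" using ds_props(2)[OF T] by simp
    finally show "emeasure M (Pair x -` (?F -` A \<inter> space ?X)) = emeasure M (Pair x -` A)"
      unfolding e .
  qed
  also have "\<dots> = emeasure ?X A" by (rule emeasure_pair_measure_alt[OF A, symmetric])
  finally show "emeasure (distr ?X ?X ?F) A = emeasure ?X A" .
qed

lemma integral_Phic:
  fixes T :: "real ^ 'n \<Rightarrow> 'w \<Rightarrow> 'w" and Q :: "(real ^ 'n) set" and g :: "_ \<Rightarrow> real"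
  assumes T: "dynamical_system M T" and M: "prob_space M"
  shows "(\<integral>p. g (fst p, T (c *\<^sub>R fst p) (snd p)) \<partial>(restrict_space lborel Q \<Otimes>\<^sub>M M))
       = (\<integral>p. g p \<partial>(restrict_space lborel Q \<Otimes>\<^sub>M M))"
proof (cases "g \<in> borel_measurable (restrict_space lborel Q \<Otimes>\<^sub>M M)")
  case True
  show ?thesis
    using integral_distr[OF Phic_meas[OF T, of c Q] True] Phic_distr[OF T M, of Q c] by simp
next
  case False
  let ?X = "restrict_space lborel Q \<Otimes>\<^sub>M M"
  have "\<not> (\<lambda>p. g (fst p, T (c *\<^sub>R fst p) (snd p))) \<in> borel_measurable ?X"
  proof
    assume h: "(\<lambda>p. g (fst p, T (c *\<^sub>R fst p) (snd p))) \<in> borel_measurable ?X"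
    have "(\<lambda>q. (\<lambda>p. g (fst p, T (c *\<^sub>R fst p) (snd p))) (fst q, T ((- c) *\<^sub>R fst q) (snd q))) \<in> borel_measurable ?X"
      by (rule measurable_compose[OF Phic_meas[OF T] h])
    moreover have "\<And>q. q \<in> space ?X \<Longrightarrow>
        (\<lambda>p. g (fst p, T (c *\<^sub>R fst p) (snd p))) (fst q, T ((- c) *\<^sub>R fst q) (snd q)) = g q"
      using Phic_inv[OF T, of _ Q "- c"] by (simp only: minus_minus)
    ultimately have "g \<in> borel_measurable ?X" by (rule measurable_cong[THEN iffD1, rotated])
    thus False using False by simp
  qed
  hence "\<not> integrable ?X (\<lambda>p. g (fst p, T (c *\<^sub>R fst p) (snd p)))"
    by (rule contrapos_nn) (erule borel_measurable_integrable)
  moreover have "\<not> integrable ?X g" using False by (rule contrapos_nn) (erule borel_measurable_integrable)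
  ultimately show ?thesis by (simp add: not_integrable_integral_eq)
qed


lemma U_int:
  fixes v w :: "'a \<Rightarrow> real ^ 'n"
  assumes Y: "young_function \<phi> \<Phi>" and D: "Delta2 \<Phi>" and X: "finite_measure X"
    and v: "v \<in> orliczN X \<Phi>" and w: "w \<in> orliczN X \<Phi>"
  shows "integrable X (\<lambda>z. \<Phi> (2 * (1 + norm (v z) + norm (w z))))"
proof -
  have bi: "integrable X (\<lambda>z. \<Phi> 6 + \<Phi> (6 * norm (v z)) + \<Phi> (6 * norm (w z)))"
    using orliczN_Phi_int[OF Y D X v, of 6] orliczN_Phi_int[OF Y D X w, of 6]
      finite_measure.integrable_const[OF X] by (intro Bochner_Integration.integrable_add) auto
  show ?thesis
  proof (rule Bochner_Integration.integrable_bound[OF bi])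
    have "(\<lambda>z. 2 * (1 + norm (v z) + norm (w z))) \<in> borel_measurable X"
      using orliczN_meas[OF v] orliczN_meas[OF w] by measurable
    thus "(\<lambda>z. \<Phi> (2 * (1 + norm (v z) + norm (w z)))) \<in> borel_measurable X"
      by (rule goodG_meas[OF goodG_Phi[OF Y]]) simp
    show "AE x in X. norm (\<Phi> (2 * (1 + norm (v x) + norm (w x)))) \<le> norm (\<Phi> 6 + \<Phi> (6 * norm (v x)) + \<Phi> (6 * norm (w x)))"
    proof (rule AE_I2)
      fix x
      have e: "2 * (1 + norm (v x) + norm (w x)) = 2 + 2 * norm (v x) + 2 * norm (w x)" by simp
      have "\<Phi> (2 * (1 + norm (v x) + norm (w x))) \<le> \<Phi> (3*2) + \<Phi> (3 * (2 * norm (v x))) + \<Phi> (3 * (2 * norm (w x)))"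
        unfolding e by (rule Phi_sum3[OF Y]) auto
      moreover have "0 \<le> \<Phi> (2 * (1 + norm (v x) + norm (w x)))" by (rule yf_Phi_nonneg[OF Y]) simp
      ultimately show "norm (\<Phi> (2 * (1 + norm (v x) + norm (w x)))) \<le> norm (\<Phi> 6 + \<Phi> (6 * norm (v x)) + \<Phi> (6 * norm (w x)))"
        by (simp add: mult.assoc)
    qed
  qed
qed

lemma lip_integral:
  fixes v w :: "'a \<Rightarrow> real ^ 'n"
  assumes Y: "young_function \<phi> \<Phi>" and D: "Delta2 \<Phi>" and X: "finite_measure X"
    and v: "v \<in> orliczN X \<Phi>" and w: "w \<in> orliczN X \<Phi>"
    and Fv: "integrable X Fv" and Fw: "integrable X Fw" and C: "0 \<le> C"
    and pw: "\<And>p. p \<in> space X \<Longrightarrow> \<bar>Fv p - Fw p\<bar> \<le> C * (1 + \<phi> (1 + norm (v p) + norm (w p))) * norm (v p - w p)"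
  shows "(\<integral>p. \<bar>Fv p - Fw p\<bar> \<partial>X) \<le> (2 * C) * (lux_norm X (young_conj \<Phi>) (\<lambda>_. 1)
                     + lux_norm X (young_conj \<Phi>) (\<lambda>p. \<phi> (1 + norm (v p) + norm (w p))))
                  * lux_normN X \<Phi> (\<lambda>p. v p - w p)"
proof -
  define h where "h i z = v z $ i - w z $ i" for i z
  define U where "U z = 1 + norm (v z) + norm (w z)" for z
  define A where "A = lux_norm X (young_conj \<Phi>) (\<lambda>_. 1)"
  define B where "B = lux_norm X (young_conj \<Phi>) (\<lambda>p. \<phi> (U p))"
  have hO: "h i \<in> orlicz X \<Phi>" for i
    using orlicz_diff[OF Y D X, of "\<lambda>z. v z $ i" "\<lambda>z. w z $ i"] v w
    unfolding h_def orliczN_def by auto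
  have Um: "U \<in> borel_measurable X" unfolding U_def using orliczN_meas[OF v] orliczN_meas[OF w] by measurable
  have U0: "\<And>z. 0 \<le> U z" unfolding U_def by simp
  have UI: "integrable X (\<lambda>z. \<Phi> (2 * U z))" using U_int[OF Y D X v w] unfolding U_def .
  have pU: "(\<lambda>z. \<phi> (U z)) \<in> orlicz X (young_conj \<Phi>)" by (rule phiU_orlicz(1)[OF Y X Um U0 UI])
  have one: "(\<lambda>_. 1) \<in> orlicz X (young_conj \<Phi>)" by (rule const_orlicz[OF Y X])
  have H1: "integrable X (\<lambda>z. 1 * h i z)" "(\<integral>z. \<bar>1 * h i z\<bar> \<partial>X) \<le> 2 * A * lux_norm X \<Phi> (h i)" for i
    using holder[OF Y one hO[of i]] unfolding A_def by auto
  have H2: "integrable X (\<lambda>z. \<phi> (U z) * h i z)" "(\<integral>z. \<bar>\<phi> (U z) * h i z\<bar> \<partial>X) \<le> 2 * B * lux_norm X \<Phi> (h i)" for i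
    using holder[OF Y pU hO[of i]] unfolding B_def by auto
  define R where "R z = C * (\<Sum>i\<in>UNIV. \<bar>1 * h i z\<bar> + \<bar>\<phi> (U z) * h i z\<bar>)" for z
  have RI: "integrable X R" unfolding R_def
    using H1(1) H2(1) by (intro integrable_mult_right Bochner_Integration.integrable_sum Bochner_Integration.integrable_add integrable_abs) auto
  have pR: "\<bar>Fv p - Fw p\<bar> \<le> R p" if p: "p \<in> space X" for p
  proof -
    have pn: "0 \<le> \<phi> (U p)" using yf_basic(3)[OF Y U0[of p]] .
    have "norm (v p - w p) \<le> (\<Sum>i\<in>UNIV. \<bar>(v p - w p) $ i\<bar>)" by (rule norm_le_l1_cart)
    also have "\<dots> = (\<Sum>i\<in>UNIV. \<bar>h i p\<bar>)" unfolding h_def by simp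
    finally have nl: "norm (v p - w p) \<le> (\<Sum>i\<in>UNIV. \<bar>h i p\<bar>)" .
    have "\<bar>Fv p - Fw p\<bar> \<le> C * (1 + \<phi> (U p)) * norm (v p - w p)" using pw[OF p] unfolding U_def .
    also have "\<dots> \<le> C * (1 + \<phi> (U p)) * (\<Sum>i\<in>UNIV. \<bar>h i p\<bar>)"
      using nl C pn by (intro mult_left_mono) auto
    also have "\<dots> = R p" unfolding R_def using pn
      by (simp add: sum_distrib_left sum.distrib abs_mult algebra_simps)
    finally show ?thesis .
  qed
  have "(\<integral>p. \<bar>Fv p - Fw p\<bar> \<partial>X) \<le> (\<integral>p. R p \<partial>X)"
    by (rule Bochner_Integration.integral_mono[OF _ RI pR]) (use Fv Fw in auto)
  also have "(\<integral>p. R p \<partial>X) = C * (\<Sum>i\<in>UNIV. (\<integral>z. \<bar>1 * h i z\<bar> \<partial>X) + (\<integral>z. \<bar>\<phi> (U z) * h i z\<bar> \<partial>X))"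
    unfolding R_def using H1(1) H2(1)
    by (simp add: Bochner_Integration.integral_sum Bochner_Integration.integral_add integrable_abs)
  also have "\<dots> \<le> C * (\<Sum>i\<in>UNIV. 2 * A * lux_norm X \<Phi> (h i) + 2 * B * lux_norm X \<Phi> (h i))"
    using H1(2) H2(2) C by (intro mult_left_mono sum_mono add_mono) auto
  also have "\<dots> = (2 * C) * (A + B) * (\<Sum>i\<in>UNIV. lux_norm X \<Phi> (h i))"
    by (simp add: sum_distrib_left sum.distrib algebra_simps)
  also have "(\<Sum>i\<in>UNIV. lux_norm X \<Phi> (h i)) = lux_normN X \<Phi> (\<lambda>p. v p - w p)"
    unfolding lux_normN_def h_def by simp
  finally show ?thesis unfolding A_def B_def U_def .
qed


lemma lux_normN_nonneg:
  fixes v :: "'a \<Rightarrow> real ^ 'n"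
  assumes Y: "young_function \<phi> \<Phi>" and v: "v \<in> orliczN X \<Phi>"
  shows "0 \<le> lux_normN X \<Phi> v"
  unfolding lux_normN_def
  by (rule sum_nonneg) (use lux_props(1)[OF goodG_Phi[OF Y]] v in \<open>auto simp: orliczN_def\<close>)

lemma cont_bound:
  fixes vs :: "nat \<Rightarrow> 'a \<Rightarrow> real ^ 'n"
  assumes Y: "young_function \<phi> \<Phi>" and D: "Delta2 \<Phi>" and X: "finite_measure X"
    and vs: "\<And>n. vs n \<in> orliczN X \<Phi>" and v: "v \<in> orliczN X \<Phi>"
    and lim: "(\<lambda>n. lux_normN X \<Phi> (\<lambda>p. vs n p - v p)) \<longlonglongrightarrow> 0"
  shows "\<exists>L. eventually (\<lambda>n. lux_norm X (young_conj \<Phi>) (\<lambda>p. \<phi> (1 + norm (vs n p) + norm (v p))) \<le> L) sequentially"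
proof -
  define h where "h n i z = vs n z $ i - v z $ i" for n i z
  have hO: "h n i \<in> orlicz X \<Phi>" for n i
    using orlicz_diff[OF Y D X, of "\<lambda>z. vs n z $ i" "\<lambda>z. v z $ i"] vs[of n] v
    unfolding h_def orliczN_def by auto
  define m where "m = 6 * real CARD('n)"
  have m0: "0 < m" unfolding m_def by simp
  have li0: "0 \<le> lux_norm X \<Phi> (h n i)" for n i by (rule lux_props(1)[OF goodG_Phi[OF Y] hO])
  have Neq: "lux_normN X \<Phi> (\<lambda>p. vs n p - v p) = (\<Sum>i\<in>UNIV. lux_norm X \<Phi> (h n i))" for n
    unfolding lux_normN_def h_def by simp
  have lii: "(\<lambda>n. lux_norm X \<Phi> (h n i)) \<longlonglongrightarrow> 0" for i
  proof (rule real_tendsto_sandwich[OF _ _ tendsto_const lim])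
    show "\<forall>\<^sub>F n in sequentially. 0 \<le> lux_norm X \<Phi> (h n i)" using li0 by simp
    show "\<forall>\<^sub>F n in sequentially. lux_norm X \<Phi> (h n i) \<le> lux_normN X \<Phi> (\<lambda>p. vs n p - v p)"
      unfolding Neq by (intro always_eventually allI member_le_sum) (use li0 in auto)
  qed
  have ev: "eventually (\<lambda>n. \<forall>i. lux_norm X \<Phi> (h n i) < 1 / m) sequentially"
  proof (rule eventually_all_finite)
    fix i show "\<forall>\<^sub>F n in sequentially. lux_norm X \<Phi> (h n i) < 1 / m"
      by (rule order_tendstoD(2)[OF lii]) (use m0 in simp)
  qed
  have vI: "integrable X (\<lambda>z. \<Phi> (12 * norm (v z)))" by (rule orliczN_Phi_int[OF Y D X v]) simp
  define B0 where "B0 = (\<integral>z. \<Phi> 6 \<partial>X) + real CARD('n) + (\<integral>z. \<Phi> (12 * norm (v z)) \<partial>X)"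
  have "eventually (\<lambda>n. lux_norm X (young_conj \<Phi>) (\<lambda>p. \<phi> (1 + norm (vs n p) + norm (v p))) \<le> max 1 B0) sequentially"
    using ev
  proof eventually_elim
    case (elim n)
    define U where "U z = 1 + norm (vs n z) + norm (v z)" for z
    have Um: "U \<in> borel_measurable X" unfolding U_def using orliczN_meas[OF vs[of n]] orliczN_meas[OF v] by measurable
    have U0: "\<And>z. 0 \<le> U z" unfolding U_def by simp
    have UI: "integrable X (\<lambda>z. \<Phi> (2 * U z))" using U_int[OF Y D X vs[of n] v] unfolding U_def .
    have sm: "integrable X (\<lambda>z. \<Phi> (m * \<bar>h n i z\<bar>))" "(\<integral>z. \<Phi> (m * \<bar>h n i z\<bar>) \<partial>X) \<le> 1" for i
      using orlicz_small[OF Y hO m0 elim[rule_format, of i]] by auto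
    define R where "R z = \<Phi> 6 + (\<Sum>i\<in>UNIV. \<Phi> (m * \<bar>h n i z\<bar>)) + \<Phi> (12 * norm (v z))" for z
    have RI: "integrable X R" unfolding R_def using sm(1) vI finite_measure.integrable_const[OF X]
      by (intro Bochner_Integration.integrable_add Bochner_Integration.integrable_sum) auto
    have pR: "\<Phi> (2 * U z) \<le> R z" for z
    proof -
      define Dz where "Dz = norm (vs n z - v z)"
      have tri: "norm (vs n z) \<le> Dz + norm (v z)" unfolding Dz_def by (metis norm_triangle_sub add.commute)
      have "\<Phi> (2 * U z) \<le> \<Phi> (2 + 2 * Dz + 4 * norm (v z))"
        by (rule yf_Phi_mono[OF Y]) (use tri in \<open>auto simp: U_def\<close>)
      also have "\<dots> \<le> \<Phi> (3 * 2) + \<Phi> (3 * (2 * Dz)) + \<Phi> (3 * (4 * norm (v z)))"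
        by (rule Phi_sum3[OF Y]) (auto simp: Dz_def)
      also have "\<Phi> (3 * (2 * Dz)) \<le> (\<Sum>i\<in>UNIV. \<Phi> (6 * real CARD('n) * \<bar>(vs n z - v z) $ i\<bar>))"
        using Phi_norm_sum[OF Y, of 6 "vs n z - v z"] unfolding Dz_def by (simp add: mult.assoc)
      also have "\<dots> = (\<Sum>i\<in>UNIV. \<Phi> (m * \<bar>h n i z\<bar>))" unfolding m_def h_def by simp
      finally show ?thesis unfolding R_def by (simp add: mult.assoc)
    qed
    have "(\<integral>z. \<Phi> (2 * U z) \<partial>X) \<le> (\<integral>z. R z \<partial>X)"
      by (rule Bochner_Integration.integral_mono[OF UI RI pR])
    also have "(\<integral>z. R z \<partial>X) = (\<integral>z. \<Phi> 6 \<partial>X) + (\<Sum>i\<in>UNIV. (\<integral>z. \<Phi> (m * \<bar>h n i z\<bar>) \<partial>X)) + (\<integral>z. \<Phi> (12 * norm (v z)) \<partial>X)"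
    proof -
      have sI: "integrable X (\<lambda>z. \<Sum>i\<in>UNIV. \<Phi> (m * \<bar>h n i z\<bar>))"
        by (rule Bochner_Integration.integrable_sum) (rule sm(1))
      have cI: "integrable X (\<lambda>z. \<Phi> 6)" by (rule finite_measure.integrable_const[OF X])
      have i1: "integrable X (\<lambda>z. \<Phi> 6 + (\<Sum>i\<in>UNIV. \<Phi> (m * \<bar>h n i z\<bar>)))"
        by (rule Bochner_Integration.integrable_add[OF cI sI])
      have "(\<integral>z. R z \<partial>X) = (\<integral>z. \<Phi> 6 + (\<Sum>i\<in>UNIV. \<Phi> (m * \<bar>h n i z\<bar>)) \<partial>X) + (\<integral>z. \<Phi> (12 * norm (v z)) \<partial>X)"
        unfolding R_def by (rule Bochner_Integration.integral_add[OF i1 vI])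
      also have "(\<integral>z. \<Phi> 6 + (\<Sum>i\<in>UNIV. \<Phi> (m * \<bar>h n i z\<bar>)) \<partial>X) = (\<integral>z. \<Phi> 6 \<partial>X) + (\<integral>z. (\<Sum>i\<in>UNIV. \<Phi> (m * \<bar>h n i z\<bar>)) \<partial>X)"
        by (rule Bochner_Integration.integral_add[OF cI sI])
      also have "(\<integral>z. (\<Sum>i\<in>UNIV. \<Phi> (m * \<bar>h n i z\<bar>)) \<partial>X) = (\<Sum>i\<in>UNIV. (\<integral>z. \<Phi> (m * \<bar>h n i z\<bar>) \<partial>X))"
        by (rule Bochner_Integration.integral_sum) (rule sm(1))
      finally show ?thesis .
    qed
    also have "\<dots> \<le> B0"
    proof -
      have "(\<Sum>i\<in>UNIV. (\<integral>z. \<Phi> (m * \<bar>h n i z\<bar>) \<partial>X)) \<le> (\<Sum>i\<in>(UNIV::'n set). 1)"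
        by (rule sum_mono) (rule sm(2))
      thus ?thesis unfolding B0_def by simp
    qed
    finally have ib: "(\<integral>z. \<Phi> (2 * U z) \<partial>X) \<le> B0" .
    have "lux_norm X (young_conj \<Phi>) (\<lambda>z. \<phi> (U z)) \<le> max 1 (\<integral>z. \<Phi> (2 * U z) \<partial>X)"
      by (rule phiU_orlicz(2)[OF Y X Um U0 UI])
    also have "\<dots> \<le> max 1 B0" using ib by simp
    finally show ?case unfolding U_def .
  qed
  thus ?thesis by blast
qed


theorem proposition23:
  fixes \<phi> \<Phi> :: "real \<Rightarrow> real"
    and Q :: "(real ^ 'n) set"
    and M :: "'w measure"
    and T :: "real ^ 'n \<Rightarrow> 'w \<Rightarrow> 'w"
    and f :: "'w \<Rightarrow> real ^ 'n \<Rightarrow> real"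
    and c1 c2 :: real
  defines "QO \<equiv> restrict_space lborel Q \<Otimes>\<^sub>M M"
  assumes young: "young_function \<phi> \<Phi>"
    and D2: "Delta2 \<Phi>" "Delta2 (young_conj \<Phi>)"
    and Dp: "Delta' \<Phi>" "Delta' (young_conj \<Phi>)"
    and Q: "open Q" "bounded Q"
    and M: "prob_space M"
    and T: "dynamical_system M T"
    and H1: "\<And>l. (\<lambda>\<omega>. f \<omega> l) \<in> borel_measurable M"
    and H2: "AE \<omega> in M. strictly_convex (f \<omega>)"
    and H3: "0 < c1" "0 < c2"
      "\<And>l. AE \<omega> in M. c1 * \<Phi> (norm l) \<le> f \<omega> l \<and> f \<omega> l \<le> c2 * (1 + \<Phi> (norm l))"
  shows
    "(\<forall>v\<in>tensor_spaceN M T Q.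
        ((\<lambda>\<epsilon>. \<integral>p. f (T ((1 / \<epsilon>) *\<^sub>R fst p) (snd p))
                      (v (fst p, T ((1 / \<epsilon>) *\<^sub>R fst p) (snd p))) \<partial>QO)
          \<longlongrightarrow> (\<integral>p. f (snd p) (v p) \<partial>QO)) (at_right 0))
     \<and>
     (\<exists>F :: ((real ^ 'n) \<times> 'w \<Rightarrow> real ^ 'n) \<Rightarrow> ((real ^ 'n) \<times> 'w \<Rightarrow> real).
        (\<forall>v\<in>tensor_spaceN M T Q. AE p in QO. F v p = f (snd p) (v p)) \<and>
        (\<forall>v\<in>orliczN QO \<Phi>. integrable QO (F v)) \<and>
        (\<forall>vs v. (\<forall>n. vs n \<in> orliczN QO \<Phi>) \<longrightarrow> v \<in> orliczN QO \<Phi> \<longrightarrow>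
            (\<lambda>n. lux_normN QO \<Phi> (\<lambda>p. vs n p - v p)) \<longlonglongrightarrow> 0 \<longrightarrow>
            (\<lambda>n. \<integral>p. \<bar>F (vs n) p - F v p\<bar> \<partial>QO) \<longlonglongrightarrow> 0) \<and>
        (\<exists>c>0. \<forall>v\<in>orliczN QO \<Phi>. \<forall>w\<in>orliczN QO \<Phi>.
            (\<integral>p. \<bar>F v p - F w p\<bar> \<partial>QO)
              \<le> c * (lux_norm QO (young_conj \<Phi>) (\<lambda>_. 1)
                     + lux_norm QO (young_conj \<Phi>) (\<lambda>p. \<phi> (1 + norm (v p) + norm (w p))))
                  * lux_normN QO \<Phi> (\<lambda>p. v p - w p)))"
proof -
  interpret Mp: prob_space M by (rule M)
  obtain N where N: "N \<in> sets M" "emeasure M N = 0"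
    "\<And>\<omega>. \<omega> \<in> space M - N \<Longrightarrow> convex_on UNIV (f \<omega>)"
    "\<And>\<omega>. \<omega> \<in> space M - N \<Longrightarrow> continuous_on UNIV (f \<omega>)"
    "\<And>\<omega> l. \<omega> \<in> space M - N \<Longrightarrow> 0 \<le> f \<omega> l"
    "\<And>\<omega> l. \<omega> \<in> space M - N \<Longrightarrow> f \<omega> l \<le> c2 * (1 + \<Phi> (norm l))"
    using good_set[OF young H2 H3(1) H3(2) H3(3)] by blast
  define G where "G = space M - N"
  have GM: "G \<in> sets M" unfolding G_def using N(1) by auto
  obtain d :: "nat \<Rightarrow> real ^ 'n" where d: "\<And>U. open U \<Longrightarrow> U \<noteq> {} \<Longrightarrow> \<exists>j. d j \<in> U"
    using dense_seq by blast
  obtain K where K: "K > 0" "\<And>(g :: real ^ 'n \<Rightarrow> real) a b c2. convex_on UNIV g \<Longrightarrow> (\<And>x. 0 \<le> g x) \<Longrightarrow>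
     (\<And>x. g x \<le> c2 * (1 + \<Phi> (norm x))) \<Longrightarrow> 0 < c2 \<Longrightarrow>
     \<bar>g a - g b\<bar> \<le> c2 * K * (1 + \<phi> (1 + norm a + norm b)) * norm (a - b)"
    using convex_lip2[OF young D2(1)] by blast
  define F where "F = (\<lambda>(v :: (real ^ 'n) \<times> 'w \<Rightarrow> real ^ 'n) p. if snd p \<in> G then f (snd p) (v p) else 0)"
  have Qs: "Q \<in> sets lborel" using Q(1) by simp
  have QX: "finite_measure QO"
    unfolding QO_def
  proof (rule finite_measure_pair_measure)
    show "finite_measure M" by (rule Mp.finite_measure_axioms)
    show "finite_measure (restrict_space lborel Q)"
    proof (rule finite_measureI)
      have "emeasure (restrict_space lborel Q) (space (restrict_space lborel Q)) = emeasure lborel Q"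
        using Qs by (simp add: emeasure_restrict_space space_restrict_space)
      also have "\<dots> < \<infinity>" by (rule emeasure_bounded_finite[OF Q(2)])
      finally show "emeasure (restrict_space lborel Q) (space (restrict_space lborel Q)) \<noteq> \<infinity>" by simp
    qed
  qed
  have snd_m: "snd \<in> QO \<rightarrow>\<^sub>M M" unfolding QO_def by (rule measurable_snd)
  have Fmeas: "F v \<in> borel_measurable QO" if "v \<in> borel_measurable QO" for v
    unfolding F_def
  proof (rule carath_meas[OF d GM H1 _ snd_m that])
    fix \<omega> assume "\<omega> \<in> G" thus "continuous_on UNIV (f \<omega>)" unfolding G_def by (rule N(4))
  qed
  have Fnn: "0 \<le> F v p" for v p unfolding F_def using N(5) by (simp add: G_def)
  have Fub: "F v p \<le> c2 * (1 + \<Phi> (norm (v p)))" for v p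
  proof (cases "snd p \<in> G")
    case True thus ?thesis using N(6) unfolding F_def G_def by simp
  next
    case False
    have "0 \<le> c2 * (1 + \<Phi> (norm (v p)))" using H3(2) yf_Phi_nonneg[OF young, of "norm (v p)"] by simp
    thus ?thesis using False unfolding F_def by simp
  qed
  have Fint: "integrable QO (F v)" if v: "v \<in> orliczN QO \<Phi>" for v
  proof -
    have bi: "integrable QO (\<lambda>p. c2 * (1 + \<Phi> (1 * norm (v p))))"
      using orliczN_Phi_int[OF young D2(1) QX v, of 1] finite_measure.integrable_const[OF QX]
      by (intro integrable_mult_right Bochner_Integration.integrable_add) auto
    show ?thesis
    proof (rule Bochner_Integration.integrable_bound[OF bi Fmeas[OF orliczN_meas[OF v]]])
      show "AE x in QO. norm (F v x) \<le> norm (c2 * (1 + \<Phi> (1 * norm (v x))))"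
      proof (rule AE_I2)
        fix x
        have "norm (F v x) = F v x" using Fnn[of v x] by simp
        also have "\<dots> \<le> c2 * (1 + \<Phi> (1 * norm (v x)))" using Fub[of v x] by simp
        also have "\<dots> \<le> norm (c2 * (1 + \<Phi> (1 * norm (v x))))" by simp
        finally show "norm (F v x) \<le> norm (c2 * (1 + \<Phi> (1 * norm (v x))))" .
      qed
    qed
  qed
  have Flip: "\<bar>F v p - F w p\<bar> \<le> (c2 * K) * (1 + \<phi> (1 + norm (v p) + norm (w p))) * norm (v p - w p)" for v w p
  proof (cases "snd p \<in> G")
    case True
    have "\<bar>f (snd p) (v p) - f (snd p) (w p)\<bar> \<le> c2 * K * (1 + \<phi> (1 + norm (v p) + norm (w p))) * norm (v p - w p)"
      by (rule K(2)) (use True N(3,5,6) H3(2) in \<open>auto simp: G_def\<close>)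
    thus ?thesis using True unfolding F_def by simp
  next
    case False
    have "0 \<le> \<phi> (1 + norm (v p) + norm (w p))" by (rule yf_basic(3)[OF young]) simp
    hence "0 \<le> (c2 * K) * (1 + \<phi> (1 + norm (v p) + norm (w p))) * norm (v p - w p)"
      using H3(2) K(1) by simp
    thus ?thesis using False unfolding F_def by simp
  qed
  define c where "c = 2 * (c2 * K)"
  have c0: "0 < c" unfolding c_def using H3(2) K(1) by simp
  have Lip: "(\<integral>p. \<bar>F v p - F w p\<bar> \<partial>QO) \<le> c * (lux_norm QO (young_conj \<Phi>) (\<lambda>_. 1)
                     + lux_norm QO (young_conj \<Phi>) (\<lambda>p. \<phi> (1 + norm (v p) + norm (w p))))
                  * lux_normN QO \<Phi> (\<lambda>p. v p - w p)"
    if v: "v \<in> orliczN QO \<Phi>" and w: "w \<in> orliczN QO \<Phi>" for v w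
    unfolding c_def
    by (rule lip_integral[OF young D2(1) QX v w Fint[OF v] Fint[OF w]]) (use H3(2) K(1) Flip in auto)
  have AEt: "AE p in QO. F v p = f (snd p) (v p)" for v
  proof (rule AE_I)
    interpret sfM: sigma_finite_measure M by (rule prob_space_imp_sigma_finite[OF M])
    let ?S = "space (restrict_space lborel Q) \<times> N"
    show "{p \<in> space QO. \<not> F v p = f (snd p) (v p)} \<subseteq> ?S"
      unfolding QO_def F_def G_def by (auto simp: space_pair_measure)
    show S: "?S \<in> sets QO" unfolding QO_def using N(1) by (intro pair_measureI) auto
    have "emeasure QO ?S = (\<integral>\<^sup>+x. emeasure M (Pair x -` ?S) \<partial>restrict_space lborel Q)"
      unfolding QO_def by (rule sigma_finite_measure.emeasure_pair_measure_alt[OF prob_space_imp_sigma_finite[OF M]]) (use S in \<open>simp add: QO_def\<close>)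
    also have "\<dots> = (\<integral>\<^sup>+x. 0 \<partial>restrict_space lborel Q)"
      by (rule nn_integral_cong) (simp add: N(2))
    finally show "emeasure QO ?S = 0" by simp
  qed
  have P1: "((\<lambda>\<epsilon>. \<integral>p. f (T ((1 / \<epsilon>) *\<^sub>R fst p) (snd p))
                      (v (fst p, T ((1 / \<epsilon>) *\<^sub>R fst p) (snd p))) \<partial>QO)
          \<longlongrightarrow> (\<integral>p. f (snd p) (v p) \<partial>QO)) (at_right 0)" for v
  proof -
    have e: "(\<integral>p. f (T (c' *\<^sub>R fst p) (snd p)) (v (fst p, T (c' *\<^sub>R fst p) (snd p))) \<partial>QO)
        = (\<integral>p. f (snd p) (v p) \<partial>QO)" for c'
      using integral_Phic[OF T M, where g="\<lambda>q. f (snd q) (v q)" and c=c' and Q=Q] unfolding QO_def by simp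
    show ?thesis unfolding e by (rule tendsto_const)
  qed
  have Cont: "(\<lambda>n. \<integral>p. \<bar>F (vs n) p - F v p\<bar> \<partial>QO) \<longlonglongrightarrow> 0"
    if vs: "\<And>n. vs n \<in> orliczN QO \<Phi>" and v: "v \<in> orliczN QO \<Phi>"
      and lim: "(\<lambda>n. lux_normN QO \<Phi> (\<lambda>p. vs n p - v p)) \<longlonglongrightarrow> 0" for vs v
  proof -
    obtain L where L: "eventually (\<lambda>n. lux_norm QO (young_conj \<Phi>) (\<lambda>p. \<phi> (1 + norm (vs n p) + norm (v p))) \<le> L) sequentially"
      using cont_bound[OF young D2(1) QX vs v lim] by blast
    define A where "A = lux_norm QO (young_conj \<Phi>) (\<lambda>_. 1)"
    have A0: "0 \<le> A" unfolding A_def by (rule lux_props(1)[OF goodG_yc[OF young] const_orlicz[OF young QX]])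
    have N0: "0 \<le> lux_normN QO \<Phi> (\<lambda>p. vs n p - v p)" for n
      by (rule lux_normN_nonneg[OF young orliczN_diff[OF young D2(1) QX vs v]])
    show ?thesis
    proof (rule real_tendsto_sandwich[OF _ _ tendsto_const])
      show "\<forall>\<^sub>F n in sequentially. 0 \<le> (\<integral>p. \<bar>F (vs n) p - F v p\<bar> \<partial>QO)"
        by (intro always_eventually allI integral_nonneg_AE AE_I2) simp
      show "\<forall>\<^sub>F n in sequentially. (\<integral>p. \<bar>F (vs n) p - F v p\<bar> \<partial>QO) \<le> (c * (A + L)) * lux_normN QO \<Phi> (\<lambda>p. vs n p - v p)"
        using L
      proof eventually_elim
        case (elim n)
        have "(\<integral>p. \<bar>F (vs n) p - F v p\<bar> \<partial>QO) \<le> c * (A + lux_norm QO (young_conj \<Phi>) (\<lambda>p. \<phi> (1 + norm (vs n p) + norm (v p))))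
                  * lux_normN QO \<Phi> (\<lambda>p. vs n p - v p)"
          using Lip[OF vs v] unfolding A_def .
        also have "\<dots> \<le> (c * (A + L)) * lux_normN QO \<Phi> (\<lambda>p. vs n p - v p)"
          using elim c0 N0[of n] by (intro mult_right_mono mult_left_mono) auto
        finally show ?case .
      qed
      show "(\<lambda>n. (c * (A + L)) * lux_normN QO \<Phi> (\<lambda>p. vs n p - v p)) \<longlonglongrightarrow> 0"
        by (rule tendsto_mult_right_zero[OF lim])
    qed
  qed
  show ?thesis
  proof (intro conjI ballI exI[of _ F])
    show "\<And>v. v \<in> tensor_spaceN M T Q \<Longrightarrow> ((\<lambda>\<epsilon>. \<integral>p. f (T ((1 / \<epsilon>) *\<^sub>R fst p) (snd p))
                      (v (fst p, T ((1 / \<epsilon>) *\<^sub>R fst p) (snd p))) \<partial>QO)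
          \<longlongrightarrow> (\<integral>p. f (snd p) (v p) \<partial>QO)) (at_right 0)" by (rule P1)
    show "\<And>v. v \<in> tensor_spaceN M T Q \<Longrightarrow> AE p in QO. F v p = f (snd p) (v p)" by (rule AEt)
    show "\<And>v. v \<in> orliczN QO \<Phi> \<Longrightarrow> integrable QO (F v)" by (rule Fint)
    show "\<forall>vs v. (\<forall>n. vs n \<in> orliczN QO \<Phi>) \<longrightarrow> v \<in> orliczN QO \<Phi> \<longrightarrow>
            (\<lambda>n. lux_normN QO \<Phi> (\<lambda>p. vs n p - v p)) \<longlonglongrightarrow> 0 \<longrightarrow>
            (\<lambda>n. \<integral>p. \<bar>F (vs n) p - F v p\<bar> \<partial>QO) \<longlonglongrightarrow> 0"
      using Cont by blast
    show "\<exists>c>0. \<forall>v\<in>orliczN QO \<Phi>. \<forall>w\<in>orliczN QO \<Phi>.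
            (\<integral>p. \<bar>F v p - F w p\<bar> \<partial>QO)
              \<le> c * (lux_norm QO (young_conj \<Phi>) (\<lambda>_. 1)
                     + lux_norm QO (young_conj \<Phi>) (\<lambda>p. \<phi> (1 + norm (v p) + norm (w p))))
                  * lux_normN QO \<Phi> (\<lambda>p. v p - w p)"
      using Lip c0 by blast
  qed
qed


end
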